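(* Consider the static single-object erasure-coded Byzantine read/write protocol described in the context over a set $C$ of flexnodes, at most $b<\frac{|C|-k}{3}$ of which are Byzantine, and suppose at most $\delta$ write operations are concurrent with any read. In any execution, if $\rho_1,\rho_2$ are complete read operations such that $\rho_1$ completes before $\rho_2$ is invoked, $\rho_1$ returns a value associated with tag $t_{\rho_1}$ and $\rho_2$ returns a value associated with tag $t_{\rho_2}$, then $t_{\rho_2}\ge t_{\rho_1}$.
   Context: Model. $C$ is a fixed finite set of processes ("flexnodes") over asynchronous reliable channels. Up to $b$ flexnodes may be Byzantine. Processes invoking reads/writes follow the protocol but may crash. Signatures are unforgeable. An $[n,k]$ RLNC code with $n=|C|$: $\mathrm{Encode}(v)$ produces $|C|$ coded elements, any $k$ of which (from the same encoding) recover $v$. Tags are pairs $(z,w)$, $z\in\mathbb{N}$, $w$ a writer identifier, ordered lexicographically. A parameter $\delta\ge1$ is fixed. A quorum is any subset of $C$ of size $\lceil (2|C|+k)/3\rceil$. State. Each flexnode keeps a set $List$ of signed triples $(\langle t,e\rangle,\sigma)$, initially holding the initial pair with tag $t_0$. Primitives (by flexnode $p$): get-tag: query all, each replies with its signed max-tag entry, wait for replies from a quorum, return the maximum verified tag. put-data$(\langle t,v\rangle)$: encode $v$ into $e_1,\dots,e_{|C|}$, send $\langle t,e_j\rangle$ signed by $p$ to the $j$-th flexnode; a receiver adds it to $List$ if the signature verifies and no entry with tag $t$ exists, then if $|List|>\delta+1$ removes the entries with minimum tag, and acknowledges; $p$ waits for a quorum of acknowledgements. get-data: query all, each replies with its $List$,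 wait for a quorum, keep verified pairs, take the maximum tag appearing in at least $k$ received lists, decode and return it with its tag; if none exists the primitive does not complete. Operations: read = get-data returning $\langle t,v\rangle$, then put-data$(\langle t,v\rangle)$, then return $\langle t,v\rangle$; write$(v)$ by $w$ = get-tag returning $t$, then put-data$(\langle (t.z+1,w),v\rangle)$. *)

theory Defs
  imports Complex_Main "HOL-Library.Product_Lexorder"
begin

text \<open>Flexnodes are the indices 0..<n, i.e. C = {..<n} and n = |C|; the j-th flexnode is j.
  Tags are pairs (z,w) ordered lexicographically (Product_Lexorder).\<close>

type_synonym 'w tag = "nat \<times> 'w"
type_synonym 'w opid = "'w \<times> nat"   \<comment> \<open>(client, sequence number of its operation)\<close>
type_synonym ('w,'e) item = "'w tag \<times> 'e"

datatype 'w proc = Node nat | Cli 'w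

datatype ('w,'e) msg =
    QTag "'w opid"
  | RTag "'w opid" "('w,'e) item"
  | Put "'w opid" "'w tag" 'e
  | Ack "'w opid"
  | QData "'w opid"
  | RData "'w opid" "('w,'e) item set"

fun msg_items :: "('w,'e) msg \<Rightarrow> ('w,'e) item set" where
  "msg_items (RTag oi x) = {x}"
| "msg_items (Put oi t e) = {(t,e)}"
| "msg_items (RData oi L) = L"
| "msg_items _ = {}"

datatype ('w,'v,'e) cst =
    Idle
  | Crashed
  | Stuck                                   \<comment> \<open>get-data that does not complete\<close>
  | GT 'v "nat set" "'w tag set"            \<comment> \<open>write, get-tag: value, responders, verified tags\<close>
  | PDw "'w tag" "nat set"                  \<comment> \<open>write, put-data: tag, ackers\<close>
  | GD "nat set" "nat \<Rightarrow> ('w,'e) item set" \<comment> \<open>read, get-data: responders, verified lists\<close>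
  | PDr "'w tag" 'v "nat set"               \<comment> \<open>read, put-data: tag, value, ackers\<close>

record ('w,'v,'e) gstate =
  lst   :: "nat \<Rightarrow> ('w,'e) item set"
  cl    :: "'w \<Rightarrow> ('w,'v,'e) cst"
  cnt   :: "'w \<Rightarrow> nat"                     \<comment> \<open>operations invoked so far by each client\<close>
  net   :: "('w proc \<times> 'w proc \<times> ('w,'e) msg) set"  \<comment> \<open>messages in transit (src, dst, msg)\<close>
  sig   :: "('w,'e) item set"               \<comment> \<open>pairs validly signed (by clients) so far\<close>
  bknow :: "('w,'e) item set"               \<comment> \<open>signed pairs known to the Byzantine flexnodes\<close>

datatype ('w,'v) act =
    WInv 'w nat 'v | WResp 'w nat | RInv 'w nat | RResp 'w nat "'w tag" 'v | Tau

definition quorum_size :: "nat \<Rightarrow> nat \<Rightarrow> nat" where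
  "quorum_size n k = nat \<lceil>(2 * real n + real k) / 3\<rceil>"

definition max_entry :: "('w::linorder,'e) item set \<Rightarrow> ('w,'e) item" where
  "max_entry L = (SOME x. x \<in> L \<and> (\<forall>y\<in>L. fst y \<le> fst x))"

definition trim :: "nat \<Rightarrow> ('w::linorder,'e) item set \<Rightarrow> ('w,'e) item set" where
  "trim \<delta> L = (if card L > \<delta> + 1 then {x \<in> L. fst x \<noteq> Min (fst ` L)} else L)"

definition store :: "nat \<Rightarrow> ('w::linorder,'e) item set \<Rightarrow> ('w,'e) item set \<Rightarrow> 'w tag \<Rightarrow> 'e
    \<Rightarrow> ('w,'e) item set" where
  "store \<delta> sg L t e = (if (t,e) \<in> sg \<and> t \<notin> fst ` L then trim \<delta> (insert (t,e) L) else L)"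

definition candidates :: "nat \<Rightarrow> nat set \<Rightarrow> (nat \<Rightarrow> ('w,'e) item set) \<Rightarrow> 'w tag set" where
  "candidates k R Ls = {t. k \<le> card {j \<in> R. \<exists>e. (t,e) \<in> Ls j}}"

definition mds_code :: "nat \<Rightarrow> nat \<Rightarrow> ('v \<Rightarrow> nat \<Rightarrow> 'e) \<Rightarrow> ('e set \<Rightarrow> 'v) \<Rightarrow> bool" where
  "mds_code n k enc dec \<longleftrightarrow> (\<forall>v J. J \<subseteq> {..<n} \<and> k \<le> card J \<longrightarrow> dec (enc v ` J) = v)"

inductive step :: "nat \<Rightarrow> nat \<Rightarrow> nat \<Rightarrow> nat set \<Rightarrow> ('v \<Rightarrow> nat \<Rightarrow> 'e) \<Rightarrow> ('e set \<Rightarrow> 'v)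
    \<Rightarrow> ('w::linorder,'v,'e) gstate \<Rightarrow> ('w,'v) act \<Rightarrow> ('w,'v,'e) gstate \<Rightarrow> bool"
  for n k \<delta> B enc dec where
  write_inv:
  "\<lbrakk> cl s c = Idle; m = Suc (cnt s c) \<rbrakk> \<Longrightarrow>
   step n k \<delta> B enc dec s (WInv c m v)
     (s\<lparr>cl := (cl s)(c := GT v {} {}), cnt := (cnt s)(c := m),
        net := net s \<union> {(Cli c, Node j, QTag (c,m)) | j. j < n}\<rparr>)"
| read_inv:
  "\<lbrakk> cl s c = Idle; m = Suc (cnt s c) \<rbrakk> \<Longrightarrow>
   step n k \<delta> B enc dec s (RInv c m)
     (s\<lparr>cl := (cl s)(c := GD {} (\<lambda>_. {})), cnt := (cnt s)(c := m),
        net := net s \<union> {(Cli c, Node j, QData (c,m)) | j. j < n}\<rparr>)"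
| node_qtag:
  "\<lbrakk> i < n; i \<notin> B; (src, Node i, QTag oi) \<in> net s \<rbrakk> \<Longrightarrow>
   step n k \<delta> B enc dec s Tau
     (s\<lparr>net := insert (Node i, src, RTag oi (max_entry (lst s i))) (net s - {(src, Node i, QTag oi)})\<rparr>)"
| node_put:
  "\<lbrakk> i < n; i \<notin> B; (src, Node i, Put oi t e) \<in> net s \<rbrakk> \<Longrightarrow>
   step n k \<delta> B enc dec s Tau
     (s\<lparr>lst := (lst s)(i := store \<delta> (sig s) (lst s i) t e),
        net := insert (Node i, src, Ack oi) (net s - {(src, Node i, Put oi t e)})\<rparr>)"
| node_qdata:
  "\<lbrakk> i < n; i \<notin> B; (src, Node i, QData oi) \<in> net s \<rbrakk> \<Longrightarrow>
   step n k \<delta> B enc dec s Tau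
     (s\<lparr>net := insert (Node i, src, RData oi (lst s i)) (net s - {(src, Node i, QData oi)})\<rparr>)"
| cli_rtag_wait:
  "\<lbrakk> cl s c = GT v R T; (Node i, Cli c, RTag (c, cnt s c) x) \<in> net s; i < n; i \<notin> R;
     card (insert i R) < quorum_size n k \<rbrakk> \<Longrightarrow>
   step n k \<delta> B enc dec s Tau
     (s\<lparr>cl := (cl s)(c := GT v (insert i R) (T \<union> (if x \<in> sig s then {fst x} else {}))),
        net := net s - {(Node i, Cli c, RTag (c, cnt s c) x)}\<rparr>)"
| cli_rtag_done:
  "\<lbrakk> cl s c = GT v R T; (Node i, Cli c, RTag (c, cnt s c) x) \<in> net s; i < n; i \<notin> R;
     card (insert i R) = quorum_size n k;
     t = Max (T \<union> (if x \<in> sig s then {fst x} else {})); t' = (Suc (fst t), c) \<rbrakk> \<Longrightarrow>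
   step n k \<delta> B enc dec s Tau
     (s\<lparr>cl := (cl s)(c := PDw t' {}),
        net := (net s - {(Node i, Cli c, RTag (c, cnt s c) x)})
               \<union> {(Cli c, Node j, Put (c, cnt s c) t' (enc v j)) | j. j < n},
        sig := sig s \<union> {(t', enc v j) | j. j < n}\<rparr>)"
| cli_wack_wait:
  "\<lbrakk> cl s c = PDw t A; (Node i, Cli c, Ack (c, cnt s c)) \<in> net s; i < n; i \<notin> A;
     card (insert i A) < quorum_size n k \<rbrakk> \<Longrightarrow>
   step n k \<delta> B enc dec s Tau
     (s\<lparr>cl := (cl s)(c := PDw t (insert i A)),
        net := net s - {(Node i, Cli c, Ack (c, cnt s c))}\<rparr>)"
| cli_wack_done:
  "\<lbrakk> cl s c = PDw t A; (Node i, Cli c, Ack (c, cnt s c)) \<in> net s; i < n; i \<notin> A;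
     card (insert i A) = quorum_size n k \<rbrakk> \<Longrightarrow>
   step n k \<delta> B enc dec s (WResp c (cnt s c))
     (s\<lparr>cl := (cl s)(c := Idle),
        net := net s - {(Node i, Cli c, Ack (c, cnt s c))}\<rparr>)"
| cli_rdata_wait:
  "\<lbrakk> cl s c = GD R Ls; (Node i, Cli c, RData (c, cnt s c) L) \<in> net s; i < n; i \<notin> R;
     card (insert i R) < quorum_size n k \<rbrakk> \<Longrightarrow>
   step n k \<delta> B enc dec s Tau
     (s\<lparr>cl := (cl s)(c := GD (insert i R) (Ls(i := L \<inter> sig s))),
        net := net s - {(Node i, Cli c, RData (c, cnt s c) L)}\<rparr>)"
| cli_rdata_stuck:
  "\<lbrakk> cl s c = GD R Ls; (Node i, Cli c, RData (c, cnt s c) L) \<in> net s; i < n; i \<notin> R;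
     card (insert i R) = quorum_size n k;
     candidates k (insert i R) (Ls(i := L \<inter> sig s)) = {} \<rbrakk> \<Longrightarrow>
   step n k \<delta> B enc dec s Tau
     (s\<lparr>cl := (cl s)(c := Stuck),
        net := net s - {(Node i, Cli c, RData (c, cnt s c) L)}\<rparr>)"
| cli_rdata_done:
  "\<lbrakk> cl s c = GD R Ls; (Node i, Cli c, RData (c, cnt s c) L) \<in> net s; i < n; i \<notin> R;
     card (insert i R) = quorum_size n k;
     Ls' = Ls(i := L \<inter> sig s);
     candidates k (insert i R) Ls' \<noteq> {};
     t = Max (candidates k (insert i R) Ls');
     v = dec {e. \<exists>j \<in> insert i R. (t,e) \<in> Ls' j} \<rbrakk> \<Longrightarrow>
   step n k \<delta> B enc dec s Tau
     (s\<lparr>cl := (cl s)(c := PDr t v {}),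
        net := (net s - {(Node i, Cli c, RData (c, cnt s c) L)})
               \<union> {(Cli c, Node j, Put (c, cnt s c) t (enc v j)) | j. j < n},
        sig := sig s \<union> {(t, enc v j) | j. j < n}\<rparr>)"
| cli_rack_wait:
  "\<lbrakk> cl s c = PDr t v A; (Node i, Cli c, Ack (c, cnt s c)) \<in> net s; i < n; i \<notin> A;
     card (insert i A) < quorum_size n k \<rbrakk> \<Longrightarrow>
   step n k \<delta> B enc dec s Tau
     (s\<lparr>cl := (cl s)(c := PDr t v (insert i A)),
        net := net s - {(Node i, Cli c, Ack (c, cnt s c))}\<rparr>)"
| cli_rack_done:
  "\<lbrakk> cl s c = PDr t v A; (Node i, Cli c, Ack (c, cnt s c)) \<in> net s; i < n; i \<notin> A;
     card (insert i A) = quorum_size n k \<rbrakk> \<Longrightarrow>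
   step n k \<delta> B enc dec s (RResp c (cnt s c) t v)
     (s\<lparr>cl := (cl s)(c := Idle),
        net := net s - {(Node i, Cli c, Ack (c, cnt s c))}\<rparr>)"
| crash:
  "\<lbrakk> cl s c \<noteq> Crashed; N \<subseteq> net s; \<forall>x \<in> net s - N. fst x = Cli c \<rbrakk> \<Longrightarrow>
   step n k \<delta> B enc dec s Tau (s\<lparr>cl := (cl s)(c := Crashed), net := N\<rparr>)"
| byz_send:
  "\<lbrakk> i \<in> B; msg_items m \<subseteq> bknow s \<union> - sig s \<rbrakk> \<Longrightarrow>
   step n k \<delta> B enc dec s Tau (s\<lparr>net := insert (Node i, dst, m) (net s)\<rparr>)"
| byz_recv:
  "\<lbrakk> i \<in> B; (src, Node i, m) \<in> net s \<rbrakk> \<Longrightarrow>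
   step n k \<delta> B enc dec s Tau
     (s\<lparr>net := net s - {(src, Node i, m)}, bknow := bknow s \<union> msg_items m\<rparr>)"

definition init_state :: "nat \<Rightarrow> nat set \<Rightarrow> ('v \<Rightarrow> nat \<Rightarrow> 'e) \<Rightarrow> 'w tag \<Rightarrow> 'v \<Rightarrow> ('w,'v,'e) gstate" where
  "init_state n B enc t0 v0 =
     \<lparr>lst = (\<lambda>j. {(t0, enc v0 j)}), cl = (\<lambda>_. Idle), cnt = (\<lambda>_. 0), net = {},
      sig = {(t0, enc v0 j) | j. j < n}, bknow = {(t0, enc v0 j) | j. j \<in> B}\<rparr>"

definition execution :: "nat \<Rightarrow> nat \<Rightarrow> nat \<Rightarrow> nat set \<Rightarrow> ('v \<Rightarrow> nat \<Rightarrow> 'e) \<Rightarrow> ('e set \<Rightarrow> 'v)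
    \<Rightarrow> ('w::linorder) tag \<Rightarrow> 'v \<Rightarrow> ('w,'v) act list \<Rightarrow> bool" where
  "execution n k \<delta> B enc dec t0 v0 as \<longleftrightarrow>
     (\<exists>ss. length ss = Suc (length as) \<and> ss ! 0 = init_state n B enc t0 v0 \<and>
        (\<forall>i < length as. step n k \<delta> B enc dec (ss ! i) (as ! i) (ss ! Suc i)))"

definition inv_at :: "('w,'v) act list \<Rightarrow> 'w opid \<Rightarrow> nat \<Rightarrow> bool" where
  "inv_at as oi i \<longleftrightarrow> (\<exists>v. as ! i = WInv (fst oi) (snd oi) v) \<or> as ! i = RInv (fst oi) (snd oi)"

definition resp_at :: "('w,'v) act list \<Rightarrow> 'w opid \<Rightarrow> nat \<Rightarrow> bool" where
  "resp_at as oi i \<longleftrightarrow> as ! i = WResp (fst oi) (snd oi) \<or> (\<exists>t v. as ! i = RResp (fst oi) (snd oi) t v)"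

definition precedes :: "('w,'v) act list \<Rightarrow> 'w opid \<Rightarrow> 'w opid \<Rightarrow> bool" where
  "precedes as o1 o2 \<longleftrightarrow> (\<exists>i j. i < j \<and> j < length as \<and> resp_at as o1 i \<and> inv_at as o2 j)"

definition concurrent :: "('w,'v) act list \<Rightarrow> 'w opid \<Rightarrow> 'w opid \<Rightarrow> bool" where
  "concurrent as o1 o2 \<longleftrightarrow> \<not> precedes as o1 o2 \<and> \<not> precedes as o2 o1"

definition write_op :: "('w,'v) act list \<Rightarrow> 'w opid \<Rightarrow> bool" where
  "write_op as oi \<longleftrightarrow> (\<exists>i < length as. \<exists>v. as ! i = WInv (fst oi) (snd oi) v)"

definition read_op :: "('w,'v) act list \<Rightarrow> 'w opid \<Rightarrow> bool" where
  "read_op as oi \<longleftrightarrow> (\<exists>i < length as. as ! i = RInv (fst oi) (snd oi))"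

definition bounded_concurrency :: "nat \<Rightarrow> ('w,'v) act list \<Rightarrow> bool" where
  "bounded_concurrency \<delta> as \<longleftrightarrow>
     (\<forall>r. read_op as r \<longrightarrow> card {w. write_op as w \<and> concurrent as w r} \<le> \<delta>)"

end

theory Submission
  imports Defs
begin

definition good :: "nat \<Rightarrow> ('w::linorder) tag \<Rightarrow> ('w,'e) item set \<Rightarrow> bool" where
  "good \<delta> t L \<longleftrightarrow> t \<in> fst ` L \<or> (\<delta>+1 \<le> card L \<and> (\<forall>x\<in>L. t < fst x))"

lemma store_sub: "store \<delta> sg L t e \<subseteq> L \<union> ({(t,e)} \<inter> sg)"
  unfolding store_def trim_def by auto

lemma store_fin: "finite L \<Longrightarrow> inj_on fst L \<Longrightarrow> finite (store \<delta> sg L t e) \<and> inj_on fst (store \<delta> sg L t e)"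
proof -
  assume f: "finite L" and i: "inj_on fst L"
  have "t \<notin> fst ` L \<Longrightarrow> inj_on fst (insert (t,e) L)" using i by auto
  moreover have "\<And>P. inj_on fst (insert (t,e) L) \<Longrightarrow> inj_on fst {x \<in> insert (t,e) L. P x}"
    by (erule inj_on_subset) auto
  ultimately show ?thesis unfolding store_def trim_def using f i
    by auto
qed

lemma store_good:
  assumes fin: "finite L" and inj: "inj_on fst L" and g: "good \<delta> t L \<or> (t = t' \<and> (t',e) \<in> sg)"
  shows "good \<delta> t (store \<delta> sg L t' e)"
proof (cases "(t',e) \<in> sg \<and> t' \<notin> fst ` L")
  case False
  then have "store \<delta> sg L t' e = L" unfolding store_def by auto
  moreover have "good \<delta> t L" using g False unfolding good_def by force
  ultimately show ?thesis by simp
next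
  case True
  define L' where "L' = insert (t',e) L"
  have fin': "finite L'" using fin L'_def by simp
  have inj': "inj_on fst L'" using inj True L'_def by auto
  have cL': "card L' = Suc (card L)" using True fin L'_def by (force simp: card_insert_if)
  have st: "store \<delta> sg L t' e = trim \<delta> L'" using True L'_def unfolding store_def by auto
  show ?thesis
  proof (cases "card L' > \<delta> + 1")
    case False
    then have "trim \<delta> L' = L'" unfolding trim_def by auto
    moreover have "good \<delta> t L'"
      using g False cL' L'_def unfolding good_def by auto
    ultimately show ?thesis using st by simp
  next
    case big: True
    define m where "m = Min (fst ` L')"
    have L'': "trim \<delta> L' = {x \<in> L'. fst x \<noteq> m}" using big unfolding trim_def m_def by auto
    have ne: "L' \<noteq> {}" using L'_def by auto
    have mmin: "\<And>x. x \<in> L' \<Longrightarrow> m \<le> fst x" unfolding m_def using fin' by auto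
    have min_in: "m \<in> fst ` L'" unfolding m_def using fin' ne by auto
    then obtain y where y: "y \<in> L'" "fst y = m" by auto
    have "{x \<in> L'. fst x \<noteq> m} = L' - {y}" using y inj' by (auto dest: inj_onD)
    then have cL'': "card {x \<in> L'. fst x \<noteq> m} = card L' - 1" using y fin' by simp
    show ?thesis
    proof (cases "t \<in> fst ` {x \<in> L'. fst x \<noteq> m}")
      case True
      then show ?thesis using st L'' unfolding good_def by auto
    next
      case notin: False
      have "\<forall>x\<in>{x \<in> L'. fst x \<noteq> m}. t < fst x"
      proof
        fix x assume x: "x \<in> {x \<in> L'. fst x \<noteq> m}"
        show "t < fst x"
        proof (cases "t \<in> fst ` L'")
          case True
          then have "t = m" using notin by auto
          then show ?thesis using x mmin by (metis (mono_tags, lifting) mem_Collect_eq order_le_neq_trans)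
        next
          case False
          then have gL: "\<delta>+1 \<le> card L \<and> (\<forall>x\<in>L. t < fst x)" using g L'_def unfolding good_def by auto
          show ?thesis
          proof (cases "x \<in> L")
            case True then show ?thesis using gL by auto
          next
            case False
            then have xe: "x = (t',e)" using x L'_def by auto
            show ?thesis
            proof (rule ccontr)
              assume "\<not> t < fst x"
              then have "\<forall>z\<in>L'. fst x \<le> fst z" using gL xe L'_def by fastforce
              then have "fst x \<le> m" using min_in by auto
              then show False using x mmin by (metis (mono_tags, lifting) mem_Collect_eq order_antisym)
            qed
          qed
        qed
      qed
      moreover have "\<delta>+1 \<le> card {x \<in> L'. fst x \<noteq> m}" using cL'' big by simp
      ultimately show ?thesis using st L'' unfolding good_def by auto
    qed
  qed
qed


fun ptag :: "('w,'v,'e) cst \<Rightarrow> 'w tag \<Rightarrow> bool" where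
  "ptag (PDr t' v A) t = (t = t')"
| "ptag (PDw t' A) t = (t = t')"
| "ptag (GT v R T) t = False"
| "ptag (GD R Ls) t = False"
| "ptag Idle t = True"
| "ptag Crashed t = True"
| "ptag Stuck t = True"

fun pgood :: "nat \<Rightarrow> ('w::linorder,'v,'e) cst \<Rightarrow> ('w,'e) item set \<Rightarrow> bool" where
  "pgood \<delta> (PDr t v A) L = good \<delta> t L"
| "pgood \<delta> (PDw t A) L = good \<delta> t L"
| "pgood \<delta> (GT v R T) L = False"
| "pgood \<delta> (GD R Ls) L = False"
| "pgood \<delta> Idle L = True"
| "pgood \<delta> Crashed L = True"
| "pgood \<delta> Stuck L = True"

fun phase :: "('w,'v,'e) cst \<Rightarrow> nat" where
  "phase Idle = 3" | "phase Crashed = 4" | "phase Stuck = 3" | "phase (GT _ _ _) = 1"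
| "phase (PDw _ _) = 2" | "phase (GD _ _) = 1" | "phase (PDr _ _ _) = 2"

definition crank :: "('w,'v,'e) gstate \<Rightarrow> 'w \<Rightarrow> nat" where
  "crank s c = 5 * cnt s c + phase (cl s c)"

lemma fin_sb[simp]: "finite {(t, f j) | j. j < (n::nat)}"
proof -
  have "{(t, f j) | j. j < n} = (\<lambda>j. (t, f j)) ` {..<n}" by auto
  then show ?thesis by simp
qed

definition IPut :: "('w::linorder,'v,'e) gstate \<Rightarrow> bool" where
"IPut s \<longleftrightarrow> (\<forall>c dst oi t e. (Cli c, dst, Put oi t e) \<in> net s \<longrightarrow> (t,e) \<in> sig s \<and> fst oi = c \<and> snd oi \<le> cnt s c
      \<and> (snd oi = cnt s c \<longrightarrow> ptag (cl s c) t))"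

definition IAck :: "nat \<Rightarrow> nat \<Rightarrow> nat set \<Rightarrow> ('w::linorder,'v,'e) gstate \<Rightarrow> bool" where
"IAck n \<delta> B s \<longleftrightarrow> (\<forall>a c oi. (Node a, Cli c, Ack oi) \<in> net s \<longrightarrow> a < n \<longrightarrow> a \<notin> B \<longrightarrow> fst oi = c \<and> snd oi \<le> cnt s c
      \<and> (snd oi = cnt s c \<longrightarrow> pgood \<delta> (cl s c) (lst s a)))"

definition IPDr :: "nat \<Rightarrow> nat \<Rightarrow> nat set \<Rightarrow> ('v \<Rightarrow> nat \<Rightarrow> 'e) \<Rightarrow> ('w::linorder,'v,'e) gstate \<Rightarrow> bool" where
"IPDr n \<delta> B enc s \<longleftrightarrow> (\<forall>c t v A. cl s c = PDr t v A \<longrightarrow> A \<subseteq> {..<n} \<and> (\<forall>a\<in>A-B. good \<delta> t (lst s a)) \<and> (\<forall>j<n. (t, enc v j) \<in> sig s))"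

definition IPDw :: "nat \<Rightarrow> nat \<Rightarrow> nat set \<Rightarrow> ('w::linorder,'v,'e) gstate \<Rightarrow> bool" where
"IPDw n \<delta> B s \<longleftrightarrow> (\<forall>c t A. cl s c = PDw t A \<longrightarrow> A \<subseteq> {..<n} \<and> (\<forall>a\<in>A-B. good \<delta> t (lst s a)))"

definition IQD :: "('w::linorder,'v,'e) gstate \<Rightarrow> bool" where
"IQD s \<longleftrightarrow> (\<forall>c dst oi. (Cli c, dst, QData oi) \<in> net s \<longrightarrow> fst oi = c \<and> snd oi \<le> cnt s c)"

definition IGD :: "nat \<Rightarrow> ('w::linorder,'v,'e) gstate \<Rightarrow> bool" where
"IGD n s \<longleftrightarrow> (\<forall>c R Ls. cl s c = GD R Ls \<longrightarrow> R \<subseteq> {..<n} \<and> (\<forall>a. Ls a \<subseteq> sig s))"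

definition ILst :: "nat \<Rightarrow> ('w::linorder,'v,'e) gstate \<Rightarrow> bool" where
"ILst n s \<longleftrightarrow> finite (sig s) \<and> (\<forall>a. finite (lst s a) \<and> inj_on fst (lst s a)) \<and> (\<forall>a<n. lst s a \<subseteq> sig s)"

definition Inv :: "nat \<Rightarrow> nat \<Rightarrow> nat set \<Rightarrow> ('v \<Rightarrow> nat \<Rightarrow> 'e) \<Rightarrow> ('w::linorder,'v,'e) gstate \<Rightarrow> bool" where
"Inv n \<delta> B enc s \<longleftrightarrow> ILst n s \<and> IPut s \<and> IAck n \<delta> B s \<and> IPDr n \<delta> B enc s \<and> IPDw n \<delta> B s \<and> IQD s \<and> IGD n s"

lemma Inv_init: "Inv n \<delta> B enc (init_state n B enc t0 v0)"
  unfolding Inv_def ILst_def IPut_def IAck_def IPDr_def IPDw_def IQD_def IGD_def init_state_def by auto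

lemma Inv_put: "Inv n \<delta> B enc s \<Longrightarrow> (Cli c, dst, Put oi t e) \<in> net s \<Longrightarrow>
   (t,e) \<in> sig s \<and> fst oi = c \<and> snd oi \<le> cnt s c \<and> (snd oi = cnt s c \<longrightarrow> ptag (cl s c) t)"
  unfolding Inv_def IPut_def by blast

lemma Inv_ack: "Inv n \<delta> B enc s \<Longrightarrow> (Node a, Cli c, Ack oi) \<in> net s \<Longrightarrow> a < n \<Longrightarrow> a \<notin> B \<Longrightarrow>
   fst oi = c \<and> snd oi \<le> cnt s c \<and> (snd oi = cnt s c \<longrightarrow> pgood \<delta> (cl s c) (lst s a))"
  unfolding Inv_def IAck_def by blast

lemma Inv_PDr: "Inv n \<delta> B enc s \<Longrightarrow> cl s c = PDr t v A \<Longrightarrow>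
   A \<subseteq> {..<n} \<and> (\<forall>a\<in>A-B. good \<delta> t (lst s a)) \<and> (\<forall>j<n. (t, enc v j) \<in> sig s)"
  unfolding Inv_def IPDr_def by blast

lemma Inv_PDw: "Inv n \<delta> B enc s \<Longrightarrow> cl s c = PDw t A \<Longrightarrow>
   A \<subseteq> {..<n} \<and> (\<forall>a\<in>A-B. good \<delta> t (lst s a))"
  unfolding Inv_def IPDw_def by blast

lemma Inv_QData: "Inv n \<delta> B enc s \<Longrightarrow> (Cli c, dst, QData oi) \<in> net s \<Longrightarrow> fst oi = c \<and> snd oi \<le> cnt s c"
  unfolding Inv_def IQD_def by blast

lemma Inv_GD: "Inv n \<delta> B enc s \<Longrightarrow> cl s c = GD R Ls \<Longrightarrow> R \<subseteq> {..<n} \<and> (\<forall>a. Ls a \<subseteq> sig s)"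
  unfolding Inv_def IGD_def by blast

lemma Inv_lst: "Inv n \<delta> B enc s \<Longrightarrow> finite (lst s a) \<and> inj_on fst (lst s a)"
  unfolding Inv_def ILst_def by blast

lemma Inv_lst_sig: "Inv n \<delta> B enc s \<Longrightarrow> a < n \<Longrightarrow> lst s a \<subseteq> sig s"
  unfolding Inv_def ILst_def by blast

lemma Inv_sig: "Inv n \<delta> B enc s \<Longrightarrow> finite (sig s)"
  unfolding Inv_def ILst_def by blast

lemma pgood_mono: "(\<And>t. good \<delta> t L \<Longrightarrow> good \<delta> t L') \<Longrightarrow> pgood \<delta> st L \<Longrightarrow> pgood \<delta> st L'"
  by (cases st) auto

lemma ptag_pgood: "ptag st t \<Longrightarrow> good \<delta> t L' \<Longrightarrow> pgood \<delta> st L'"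
  by (cases st) auto

lemma good_step0:
  assumes I: "Inv n \<delta> B enc s" and st: "step n k \<delta> B enc dec s a s'" and g: "good \<delta> t (lst s x)"
  shows "good \<delta> t (lst s' x)"
proof -
  have fi: "finite (lst s y)" "inj_on fst (lst s y)" for y using Inv_lst[OF I] by auto
  from st show ?thesis by (cases rule: step.cases) (use g fi in \<open>auto intro!: store_good\<close>)
qed

lemma sig_mono0: "step n k \<delta> B enc dec s a s' \<Longrightarrow> sig s \<subseteq> sig s'"
  by (cases rule: step.cases) auto


lemma ILst_step: "Inv n \<delta> B enc s \<Longrightarrow> step n k \<delta> B enc dec s a s' \<Longrightarrow> ILst n s'"
proof -
  assume I: "Inv n \<delta> B enc s" and st: "step n k \<delta> B enc dec s a s'"
  have L: "ILst n s" using I unfolding Inv_def by blast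
  from st show ?thesis
  proof (cases rule: step.cases)
    case (node_put i src oi t e)
    have "finite (lst s a) \<and> inj_on fst (lst s a)" for a using L unfolding ILst_def by blast
    then have f: "finite (lst s' a) \<and> inj_on fst (lst s' a)" for a using store_fin[of "lst s i" \<delta> "sig s" t e] node_put by auto
    have "lst s' a \<subseteq> sig s'" if "a < n" for a
      using L store_sub[of \<delta> "sig s" "lst s i" t e] node_put that unfolding ILst_def by auto
    then show ?thesis using f L node_put unfolding ILst_def by auto
  qed (use L in \<open>auto simp: ILst_def\<close>)
qed

lemma IPut_step: "Inv n \<delta> B enc s \<Longrightarrow> step n k \<delta> B enc dec s a s' \<Longrightarrow> IPut s'"
proof -
  assume I: "Inv n \<delta> B enc s" and st: "step n k \<delta> B enc dec s a s'"
  have L: "IPut s" using I unfolding Inv_def by blast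
  from st L show ?thesis unfolding IPut_def
    by (cases rule: step.cases; auto; (fastforce)?)
qed

lemma IQD_step: "Inv n \<delta> B enc s \<Longrightarrow> step n k \<delta> B enc dec s a s' \<Longrightarrow> IQD s'"
proof -
  assume I: "Inv n \<delta> B enc s" and st: "step n k \<delta> B enc dec s a s'"
  have L: "IQD s" using I unfolding Inv_def by blast
  from st L show ?thesis unfolding IQD_def
    by (cases rule: step.cases; auto; (fastforce)?)
qed

lemma IGD_step: "Inv n \<delta> B enc s \<Longrightarrow> step n k \<delta> B enc dec s a s' \<Longrightarrow> IGD n s'"
proof -
  assume I: "Inv n \<delta> B enc s" and st: "step n k \<delta> B enc dec s a s'"
  have L: "IGD n s" using I unfolding Inv_def by blast
  from st L show ?thesis unfolding IGD_def
    by (cases rule: step.cases; auto; (fastforce)?)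
qed

lemma PG_step: assumes I: "Inv n \<delta> B enc s" and st: "step n k \<delta> B enc dec s a s'"
  shows "cnt s c \<le> cnt s' c \<and> (cnt s' c = cnt s c \<longrightarrow> pgood \<delta> (cl s c) (lst s x) \<longrightarrow> pgood \<delta> (cl s' c) (lst s' x))"
proof -
  have gm: "good \<delta> t' (lst s y) \<Longrightarrow> good \<delta> t' (lst s' y)" for y t'
    using good_step0[OF I st] by blast
  have pm: "pgood \<delta> st (lst s x) \<Longrightarrow> pgood \<delta> st (lst s' x)" for st
    by (rule pgood_mono[OF gm])
  from st show ?thesis
  proof (cases rule: step.cases)
    case (node_put i src oi t e)
    then show ?thesis using pm[of "cl s c"] by simp
  qed (auto simp: pm)
qed

lemma IAck_step: assumes I: "Inv n \<delta> B enc s" and st: "step n k \<delta> B enc dec s a s'" shows "IAck n \<delta> B s'"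
proof -
  have L: "IAck n \<delta> B s" using I unfolding Inv_def by blast
  from st show ?thesis
  proof (cases rule: step.cases)
      case (write_inv c m v)
      note C = write_inv
    show ?thesis unfolding IAck_def
    proof (intro allI impI)
      fix a' c' oi' assume m: "(Node a', Cli c', Ack oi') \<in> net s'" and an: "a' < n" "a' \<notin> B"
      have "(Node a', Cli c', Ack oi') \<in> net s" using m an C by auto
      then have P: "fst oi' = c' \<and> snd oi' \<le> cnt s c' \<and> (snd oi' = cnt s c' \<longrightarrow> pgood \<delta> (cl s c') (lst s a'))"
        using Inv_ack[OF I _ an] by blast
      show "fst oi' = c' \<and> snd oi' \<le> cnt s' c' \<and> (snd oi' = cnt s' c' \<longrightarrow> pgood \<delta> (cl s' c') (lst s' a'))"
        using P PG_step[OF I st, of c' a'] by auto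
    qed
    next
      case (read_inv c m)
      note C = read_inv
    show ?thesis unfolding IAck_def
    proof (intro allI impI)
      fix a' c' oi' assume m: "(Node a', Cli c', Ack oi') \<in> net s'" and an: "a' < n" "a' \<notin> B"
      have "(Node a', Cli c', Ack oi') \<in> net s" using m an C by auto
      then have P: "fst oi' = c' \<and> snd oi' \<le> cnt s c' \<and> (snd oi' = cnt s c' \<longrightarrow> pgood \<delta> (cl s c') (lst s a'))"
        using Inv_ack[OF I _ an] by blast
      show "fst oi' = c' \<and> snd oi' \<le> cnt s' c' \<and> (snd oi' = cnt s' c' \<longrightarrow> pgood \<delta> (cl s' c') (lst s' a'))"
        using P PG_step[OF I st, of c' a'] by auto
    qed
    next
      case (node_qtag i src oi)
      note C = node_qtag
    show ?thesis unfolding IAck_def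
    proof (intro allI impI)
      fix a' c' oi' assume m: "(Node a', Cli c', Ack oi') \<in> net s'" and an: "a' < n" "a' \<notin> B"
      have "(Node a', Cli c', Ack oi') \<in> net s" using m an C by auto
      then have P: "fst oi' = c' \<and> snd oi' \<le> cnt s c' \<and> (snd oi' = cnt s c' \<longrightarrow> pgood \<delta> (cl s c') (lst s a'))"
        using Inv_ack[OF I _ an] by blast
      show "fst oi' = c' \<and> snd oi' \<le> cnt s' c' \<and> (snd oi' = cnt s' c' \<longrightarrow> pgood \<delta> (cl s' c') (lst s' a'))"
        using P PG_step[OF I st, of c' a'] by auto
    qed
    next
      case (node_put i src oi t e)
      have fi: "finite (lst s a) \<and> inj_on fst (lst s a)" for a using Inv_lst[OF I] by blast
      have gm: "good \<delta> t' (lst s a) \<Longrightarrow> good \<delta> t' (lst s' a)" for a t'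
        using store_good[of "lst s i" \<delta> t' t e "sig s"] fi node_put by auto
      have pm: "pgood \<delta> st (lst s a) \<Longrightarrow> pgood \<delta> st (lst s' a)" for st a
        by (rule pgood_mono[OF gm])
      have newack: "fst oi = c \<and> snd oi \<le> cnt s c \<and> (snd oi = cnt s c \<longrightarrow> pgood \<delta> (cl s c) (lst s' i))"
        if "src = Cli c" for c
      proof -
        have P: "(t,e) \<in> sig s \<and> fst oi = c \<and> snd oi \<le> cnt s c \<and> (snd oi = cnt s c \<longrightarrow> ptag (cl s c) t)"
          using Inv_put[OF I, of c "Node i" oi t e] node_put that by simp
        then have "good \<delta> t (lst s' i)" using store_good[of "lst s i" \<delta> t t e "sig s"] fi node_put by auto
        then show ?thesis using P ptag_pgood by blast
      qed
      show ?thesis unfolding IAck_def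
      proof (intro allI impI)
        fix a c oi' assume m: "(Node a, Cli c, Ack oi') \<in> net s'" and an: "a < n" "a \<notin> B"
        show "fst oi' = c \<and> snd oi' \<le> cnt s' c \<and> (snd oi' = cnt s' c \<longrightarrow> pgood \<delta> (cl s' c) (lst s' a))"
        proof (cases "(Node a, Cli c, Ack oi') \<in> net s")
          case True
          then have "fst oi' = c \<and> snd oi' \<le> cnt s c \<and> (snd oi' = cnt s c \<longrightarrow> pgood \<delta> (cl s c) (lst s a))"
            using Inv_ack[OF I True an] by simp
          then show ?thesis using node_put pm[of "cl s c" a] by simp
        next
          case False
          then have "a = i" "src = Cli c" "oi' = oi" using m node_put by auto
          then show ?thesis using newack node_put by auto
        qed
      qed
    next
      case (node_qdata i src oi)
      note C = node_qdata
    show ?thesis unfolding IAck_def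
    proof (intro allI impI)
      fix a' c' oi' assume m: "(Node a', Cli c', Ack oi') \<in> net s'" and an: "a' < n" "a' \<notin> B"
      have "(Node a', Cli c', Ack oi') \<in> net s" using m an C by auto
      then have P: "fst oi' = c' \<and> snd oi' \<le> cnt s c' \<and> (snd oi' = cnt s c' \<longrightarrow> pgood \<delta> (cl s c') (lst s a'))"
        using Inv_ack[OF I _ an] by blast
      show "fst oi' = c' \<and> snd oi' \<le> cnt s' c' \<and> (snd oi' = cnt s' c' \<longrightarrow> pgood \<delta> (cl s' c') (lst s' a'))"
        using P PG_step[OF I st, of c' a'] by auto
    qed
    next
      case (cli_rtag_wait c v R T i x)
      note C = cli_rtag_wait
    show ?thesis unfolding IAck_def
    proof (intro allI impI)
      fix a' c' oi' assume m: "(Node a', Cli c', Ack oi') \<in> net s'" and an: "a' < n" "a' \<notin> B"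
      have "(Node a', Cli c', Ack oi') \<in> net s" using m an C by auto
      then have P: "fst oi' = c' \<and> snd oi' \<le> cnt s c' \<and> (snd oi' = cnt s c' \<longrightarrow> pgood \<delta> (cl s c') (lst s a'))"
        using Inv_ack[OF I _ an] by blast
      show "fst oi' = c' \<and> snd oi' \<le> cnt s' c' \<and> (snd oi' = cnt s' c' \<longrightarrow> pgood \<delta> (cl s' c') (lst s' a'))"
        using P PG_step[OF I st, of c' a'] by auto
    qed
    next
      case (cli_rtag_done c v R T i x t t')
      note C = cli_rtag_done
    show ?thesis unfolding IAck_def
    proof (intro allI impI)
      fix a' c' oi' assume m: "(Node a', Cli c', Ack oi') \<in> net s'" and an: "a' < n" "a' \<notin> B"
      have "(Node a', Cli c', Ack oi') \<in> net s" using m an C by auto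
      then have P: "fst oi' = c' \<and> snd oi' \<le> cnt s c' \<and> (snd oi' = cnt s c' \<longrightarrow> pgood \<delta> (cl s c') (lst s a'))"
        using Inv_ack[OF I _ an] by blast
      show "fst oi' = c' \<and> snd oi' \<le> cnt s' c' \<and> (snd oi' = cnt s' c' \<longrightarrow> pgood \<delta> (cl s' c') (lst s' a'))"
        using P PG_step[OF I st, of c' a'] by auto
    qed
    next
      case (cli_wack_wait c t A i)
      note C = cli_wack_wait
    show ?thesis unfolding IAck_def
    proof (intro allI impI)
      fix a' c' oi' assume m: "(Node a', Cli c', Ack oi') \<in> net s'" and an: "a' < n" "a' \<notin> B"
      have "(Node a', Cli c', Ack oi') \<in> net s" using m an C by auto
      then have P: "fst oi' = c' \<and> snd oi' \<le> cnt s c' \<and> (snd oi' = cnt s c' \<longrightarrow> pgood \<delta> (cl s c') (lst s a'))"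
        using Inv_ack[OF I _ an] by blast
      show "fst oi' = c' \<and> snd oi' \<le> cnt s' c' \<and> (snd oi' = cnt s' c' \<longrightarrow> pgood \<delta> (cl s' c') (lst s' a'))"
        using P PG_step[OF I st, of c' a'] by auto
    qed
    next
      case (cli_wack_done c t A i)
      note C = cli_wack_done
    show ?thesis unfolding IAck_def
    proof (intro allI impI)
      fix a' c' oi' assume m: "(Node a', Cli c', Ack oi') \<in> net s'" and an: "a' < n" "a' \<notin> B"
      have "(Node a', Cli c', Ack oi') \<in> net s" using m an C by auto
      then have P: "fst oi' = c' \<and> snd oi' \<le> cnt s c' \<and> (snd oi' = cnt s c' \<longrightarrow> pgood \<delta> (cl s c') (lst s a'))"
        using Inv_ack[OF I _ an] by blast
      show "fst oi' = c' \<and> snd oi' \<le> cnt s' c' \<and> (snd oi' = cnt s' c' \<longrightarrow> pgood \<delta> (cl s' c') (lst s' a'))"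
        using P PG_step[OF I st, of c' a'] by auto
    qed
    next
      case (cli_rdata_wait c R Ls i L)
      note C = cli_rdata_wait
    show ?thesis unfolding IAck_def
    proof (intro allI impI)
      fix a' c' oi' assume m: "(Node a', Cli c', Ack oi') \<in> net s'" and an: "a' < n" "a' \<notin> B"
      have "(Node a', Cli c', Ack oi') \<in> net s" using m an C by auto
      then have P: "fst oi' = c' \<and> snd oi' \<le> cnt s c' \<and> (snd oi' = cnt s c' \<longrightarrow> pgood \<delta> (cl s c') (lst s a'))"
        using Inv_ack[OF I _ an] by blast
      show "fst oi' = c' \<and> snd oi' \<le> cnt s' c' \<and> (snd oi' = cnt s' c' \<longrightarrow> pgood \<delta> (cl s' c') (lst s' a'))"
        using P PG_step[OF I st, of c' a'] by auto
    qed
    next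
      case (cli_rdata_stuck c R Ls i L)
      note C = cli_rdata_stuck
    show ?thesis unfolding IAck_def
    proof (intro allI impI)
      fix a' c' oi' assume m: "(Node a', Cli c', Ack oi') \<in> net s'" and an: "a' < n" "a' \<notin> B"
      have "(Node a', Cli c', Ack oi') \<in> net s" using m an C by auto
      then have P: "fst oi' = c' \<and> snd oi' \<le> cnt s c' \<and> (snd oi' = cnt s c' \<longrightarrow> pgood \<delta> (cl s c') (lst s a'))"
        using Inv_ack[OF I _ an] by blast
      show "fst oi' = c' \<and> snd oi' \<le> cnt s' c' \<and> (snd oi' = cnt s' c' \<longrightarrow> pgood \<delta> (cl s' c') (lst s' a'))"
        using P PG_step[OF I st, of c' a'] by auto
    qed
    next
      case (cli_rdata_done c R Ls i L Ls' t v)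
      note C = cli_rdata_done
    show ?thesis unfolding IAck_def
    proof (intro allI impI)
      fix a' c' oi' assume m: "(Node a', Cli c', Ack oi') \<in> net s'" and an: "a' < n" "a' \<notin> B"
      have "(Node a', Cli c', Ack oi') \<in> net s" using m an C by auto
      then have P: "fst oi' = c' \<and> snd oi' \<le> cnt s c' \<and> (snd oi' = cnt s c' \<longrightarrow> pgood \<delta> (cl s c') (lst s a'))"
        using Inv_ack[OF I _ an] by blast
      show "fst oi' = c' \<and> snd oi' \<le> cnt s' c' \<and> (snd oi' = cnt s' c' \<longrightarrow> pgood \<delta> (cl s' c') (lst s' a'))"
        using P PG_step[OF I st, of c' a'] by auto
    qed
    next
      case (cli_rack_wait c t v A i)
      note C = cli_rack_wait
    show ?thesis unfolding IAck_def
    proof (intro allI impI)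
      fix a' c' oi' assume m: "(Node a', Cli c', Ack oi') \<in> net s'" and an: "a' < n" "a' \<notin> B"
      have "(Node a', Cli c', Ack oi') \<in> net s" using m an C by auto
      then have P: "fst oi' = c' \<and> snd oi' \<le> cnt s c' \<and> (snd oi' = cnt s c' \<longrightarrow> pgood \<delta> (cl s c') (lst s a'))"
        using Inv_ack[OF I _ an] by blast
      show "fst oi' = c' \<and> snd oi' \<le> cnt s' c' \<and> (snd oi' = cnt s' c' \<longrightarrow> pgood \<delta> (cl s' c') (lst s' a'))"
        using P PG_step[OF I st, of c' a'] by auto
    qed
    next
      case (cli_rack_done c t v A i)
      note C = cli_rack_done
    show ?thesis unfolding IAck_def
    proof (intro allI impI)
      fix a' c' oi' assume m: "(Node a', Cli c', Ack oi') \<in> net s'" and an: "a' < n" "a' \<notin> B"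
      have "(Node a', Cli c', Ack oi') \<in> net s" using m an C by auto
      then have P: "fst oi' = c' \<and> snd oi' \<le> cnt s c' \<and> (snd oi' = cnt s c' \<longrightarrow> pgood \<delta> (cl s c') (lst s a'))"
        using Inv_ack[OF I _ an] by blast
      show "fst oi' = c' \<and> snd oi' \<le> cnt s' c' \<and> (snd oi' = cnt s' c' \<longrightarrow> pgood \<delta> (cl s' c') (lst s' a'))"
        using P PG_step[OF I st, of c' a'] by auto
    qed
    next
      case (crash c N)
      note C = crash
    show ?thesis unfolding IAck_def
    proof (intro allI impI)
      fix a' c' oi' assume m: "(Node a', Cli c', Ack oi') \<in> net s'" and an: "a' < n" "a' \<notin> B"
      have "(Node a', Cli c', Ack oi') \<in> net s" using m an C by auto
      then have P: "fst oi' = c' \<and> snd oi' \<le> cnt s c' \<and> (snd oi' = cnt s c' \<longrightarrow> pgood \<delta> (cl s c') (lst s a'))"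
        using Inv_ack[OF I _ an] by blast
      show "fst oi' = c' \<and> snd oi' \<le> cnt s' c' \<and> (snd oi' = cnt s' c' \<longrightarrow> pgood \<delta> (cl s' c') (lst s' a'))"
        using P PG_step[OF I st, of c' a'] by auto
    qed
    next
      case (byz_send i m dst)
      note C = byz_send
    show ?thesis unfolding IAck_def
    proof (intro allI impI)
      fix a' c' oi' assume m: "(Node a', Cli c', Ack oi') \<in> net s'" and an: "a' < n" "a' \<notin> B"
      have "(Node a', Cli c', Ack oi') \<in> net s" using m an C by auto
      then have P: "fst oi' = c' \<and> snd oi' \<le> cnt s c' \<and> (snd oi' = cnt s c' \<longrightarrow> pgood \<delta> (cl s c') (lst s a'))"
        using Inv_ack[OF I _ an] by blast
      show "fst oi' = c' \<and> snd oi' \<le> cnt s' c' \<and> (snd oi' = cnt s' c' \<longrightarrow> pgood \<delta> (cl s' c') (lst s' a'))"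
        using P PG_step[OF I st, of c' a'] by auto
    qed
    next
      case (byz_recv i src m)
      note C = byz_recv
    show ?thesis unfolding IAck_def
    proof (intro allI impI)
      fix a' c' oi' assume m: "(Node a', Cli c', Ack oi') \<in> net s'" and an: "a' < n" "a' \<notin> B"
      have "(Node a', Cli c', Ack oi') \<in> net s" using m an C by auto
      then have P: "fst oi' = c' \<and> snd oi' \<le> cnt s c' \<and> (snd oi' = cnt s c' \<longrightarrow> pgood \<delta> (cl s c') (lst s a'))"
        using Inv_ack[OF I _ an] by blast
      show "fst oi' = c' \<and> snd oi' \<le> cnt s' c' \<and> (snd oi' = cnt s' c' \<longrightarrow> pgood \<delta> (cl s' c') (lst s' a'))"
        using P PG_step[OF I st, of c' a'] by auto
    qed
    qed
qed

lemma IPDw_step: assumes I: "Inv n \<delta> B enc s" and st: "step n k \<delta> B enc dec s a s'" shows "IPDw n \<delta> B s'"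
proof -
  have L: "IPDw n \<delta> B s" using I unfolding Inv_def by blast
  from st show ?thesis
  proof (cases rule: step.cases)
      case (write_inv c m v)
      then show ?thesis using L unfolding IPDw_def by (auto; fastforce?)
    next
      case (read_inv c m)
      then show ?thesis using L unfolding IPDw_def by (auto; fastforce?)
    next
      case (node_qtag i src oi)
      then show ?thesis using L unfolding IPDw_def by (auto; fastforce?)
    next
      case (node_put i src oi t e)
      have gm: "good \<delta> t' (lst s a) \<Longrightarrow> good \<delta> t' (lst s' a)" for a t'
        using good_step0[OF I st] by blast
      then show ?thesis using L node_put unfolding IPDw_def by auto
    next
      case (node_qdata i src oi)
      then show ?thesis using L unfolding IPDw_def by (auto; fastforce?)
    next
      case (cli_rtag_wait c v R T i x)
      then show ?thesis using L unfolding IPDw_def by (auto; fastforce?)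
    next
      case (cli_rtag_done c v R T i x t t')
      then show ?thesis using L unfolding IPDw_def by (auto; fastforce?)
    next
      case (cli_wack_wait c t A i)
      have "i \<notin> B \<Longrightarrow> good \<delta> t (lst s i)" using Inv_ack[OF I, of i c "(c, cnt s c)"] cli_wack_wait by auto
      then show ?thesis using L cli_wack_wait unfolding IPDw_def by (auto; fastforce?)
    next
      case (cli_wack_done c t A i)
      then show ?thesis using L unfolding IPDw_def by (auto; fastforce?)
    next
      case (cli_rdata_wait c R Ls i L)
      then show ?thesis using L unfolding IPDw_def by (auto; fastforce?)
    next
      case (cli_rdata_stuck c R Ls i L)
      then show ?thesis using L unfolding IPDw_def by (auto; fastforce?)
    next
      case (cli_rdata_done c R Ls i L Ls' t v)
      then show ?thesis using L unfolding IPDw_def by (auto; fastforce?)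
    next
      case (cli_rack_wait c t v A i)
      then show ?thesis using L unfolding IPDw_def by (auto; fastforce?)
    next
      case (cli_rack_done c t v A i)
      then show ?thesis using L unfolding IPDw_def by (auto; fastforce?)
    next
      case (crash c N)
      then show ?thesis using L unfolding IPDw_def by (auto; fastforce?)
    next
      case (byz_send i m dst)
      then show ?thesis using L unfolding IPDw_def by (auto; fastforce?)
    next
      case (byz_recv i src m)
      then show ?thesis using L unfolding IPDw_def by (auto; fastforce?)
    qed
qed

lemma IPDr_step: assumes I: "Inv n \<delta> B enc s" and st: "step n k \<delta> B enc dec s a s'" shows "IPDr n \<delta> B enc s'"
proof -
  have L: "IPDr n \<delta> B enc s" using I unfolding Inv_def by blast
  from st show ?thesis
  proof (cases rule: step.cases)
      case (write_inv c m v)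
      then show ?thesis using L unfolding IPDr_def by (auto; fastforce?)
    next
      case (read_inv c m)
      then show ?thesis using L unfolding IPDr_def by (auto; fastforce?)
    next
      case (node_qtag i src oi)
      then show ?thesis using L unfolding IPDr_def by (auto; fastforce?)
    next
      case (node_put i src oi t e)
      have gm: "good \<delta> t' (lst s a) \<Longrightarrow> good \<delta> t' (lst s' a)" for a t'
        using good_step0[OF I st] by blast
      then show ?thesis using L node_put unfolding IPDr_def by auto
    next
      case (node_qdata i src oi)
      then show ?thesis using L unfolding IPDr_def by (auto; fastforce?)
    next
      case (cli_rtag_wait c v R T i x)
      then show ?thesis using L unfolding IPDr_def by (auto; fastforce?)
    next
      case (cli_rtag_done c v R T i x t t')
      then show ?thesis using L unfolding IPDr_def by (auto; fastforce?)
    next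
      case (cli_wack_wait c t A i)
      then show ?thesis using L unfolding IPDr_def by (auto; fastforce?)
    next
      case (cli_wack_done c t A i)
      then show ?thesis using L unfolding IPDr_def by (auto; fastforce?)
    next
      case (cli_rdata_wait c R Ls i L)
      then show ?thesis using L unfolding IPDr_def by (auto; fastforce?)
    next
      case (cli_rdata_stuck c R Ls i L)
      then show ?thesis using L unfolding IPDr_def by (auto; fastforce?)
    next
      case (cli_rdata_done c R Ls i L Ls' t v)
      then show ?thesis using L unfolding IPDr_def by (auto; fastforce?)
    next
      case (cli_rack_wait c t v A i)
      have "i \<notin> B \<Longrightarrow> good \<delta> t (lst s i)" using Inv_ack[OF I, of i c "(c, cnt s c)"] cli_rack_wait by auto
      then show ?thesis using L cli_rack_wait unfolding IPDr_def by (auto; fastforce?)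
    next
      case (cli_rack_done c t v A i)
      then show ?thesis using L unfolding IPDr_def by (auto; fastforce?)
    next
      case (crash c N)
      then show ?thesis using L unfolding IPDr_def by (auto; fastforce?)
    next
      case (byz_send i m dst)
      then show ?thesis using L unfolding IPDr_def by (auto; fastforce?)
    next
      case (byz_recv i src m)
      then show ?thesis using L unfolding IPDr_def by (auto; fastforce?)
    qed
qed

lemma Inv_step: assumes I: "Inv n \<delta> B enc s" and st: "step n k \<delta> B enc dec s a s'" shows "Inv n \<delta> B enc s'"
  unfolding Inv_def
  apply (intro conjI)
  apply (rule ILst_step[OF I st])
  apply (rule IPut_step[OF I st])
  apply (rule IAck_step[OF I st])
  apply (rule IPDr_step[OF I st])
  apply (rule IPDw_step[OF I st])
  apply (rule IQD_step[OF I st])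
  apply (rule IGD_step[OF I st])
  done

lemma phase_le3: "st \<noteq> Crashed \<Longrightarrow> phase st \<le> 3"
  by (cases st) auto

lemma phase_le4: "phase st \<le> 4"
  by (cases st) auto

lemma crank_mono: assumes st: "step n k \<delta> B enc dec s a s'" shows "crank s c \<le> crank s' c"
  using st by (cases rule: step.cases) (simp_all add: crank_def phase_le3 phase_le4)

lemma sig_mono: assumes st: "step n k \<delta> B enc dec s a s'" shows "sig s \<subseteq> sig s'"
  using st by (cases rule: step.cases) auto

lemma good_step: "Inv n \<delta> B enc s \<Longrightarrow> step n k \<delta> B enc dec s a s' \<Longrightarrow> good \<delta> t (lst s x) \<Longrightarrow> good \<delta> t (lst s' x)"
  by (rule good_step0)

lemma same_PDw: assumes st: "step n k \<delta> B enc dec s a s'" shows "cl s c = PDw t A \<Longrightarrow> crank s' c = crank s c \<Longrightarrow> \<exists>A'. cl s' c = PDw t A'"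
  using st by (cases rule: step.cases) (auto simp: crank_def split: if_splits)

lemma same_PDr: assumes st: "step n k \<delta> B enc dec s a s'" shows "cl s c = PDr t v A \<Longrightarrow> crank s' c = crank s c \<Longrightarrow> \<exists>v' A'. cl s' c = PDr t v' A'"
  using st by (cases rule: step.cases) (auto simp: crank_def split: if_splits)

lemma same_GD: assumes st: "step n k \<delta> B enc dec s a s'" shows "cl s c = GD R Ls \<Longrightarrow> crank s' c = crank s c \<Longrightarrow> \<exists>R' Ls'. cl s' c = GD R' Ls'"
  using st by (cases rule: step.cases) (auto simp: crank_def split: if_splits)

lemma GD_noPDw: assumes st: "step n k \<delta> B enc dec s a s'" shows "cl s c = GD R Ls \<Longrightarrow> cl s' c \<noteq> PDw t A"
  using st by (cases rule: step.cases) (auto split: if_splits)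

lemma GD_PDr: assumes st: "step n k \<delta> B enc dec s a s'" shows "cl s c = GD R Ls \<Longrightarrow> cl s' c = PDr t v A \<Longrightarrow>
  \<exists>i L. (Node i, Cli c, RData (c, cnt s c) L) \<in> net s \<and> i < n \<and> i \<notin> R \<and> card (insert i R) = quorum_size n k
   \<and> candidates k (insert i R) (Ls(i := L \<inter> sig s)) \<noteq> {} \<and> t = Max (candidates k (insert i R) (Ls(i := L \<inter> sig s)))
   \<and> cnt s' c = cnt s c"
  using st
proof (cases rule: step.cases)
  case (cli_rdata_done c' R' Ls' i L Ls'' t' v')
  assume g: "cl s c = GD R Ls" and p: "cl s' c = PDr t v A"
  show ?thesis
  proof (cases "c' = c")
    case True
    then show ?thesis using cli_rdata_done g p by (intro exI[of _ i] exI[of _ L]) auto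
  next
    case False
    then show ?thesis using cli_rdata_done g p by auto
  qed
qed (auto split: if_splits)

lemma GT_up: assumes st: "step n k \<delta> B enc dec s a s'" shows "crank s c < crank s' c \<Longrightarrow> cl s' c = GT v R T \<Longrightarrow> \<exists>v'. a = WInv c (cnt s' c) v'"
  using st by (cases rule: step.cases) (auto simp: crank_def split: if_splits)

lemma WInv_step: "step n k \<delta> B enc dec s (WInv c m v) s' \<Longrightarrow> cnt s c < m \<and> cnt s' c = m"
  by (cases rule: step.cases) auto

lemma RInv_step: "step n k \<delta> B enc dec s (RInv c m) s' \<Longrightarrow> cnt s c < m \<and> cnt s' c = m \<and> cl s' c = GD {} (\<lambda>_. {})"
  by (cases rule: step.cases) auto

lemma WResp_step: "step n k \<delta> B enc dec s (WResp c m) s' \<Longrightarrow>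
  \<exists>t A i. cl s c = PDw t A \<and> cnt s c = m \<and> (Node i, Cli c, Ack (c, cnt s c)) \<in> net s \<and> i < n \<and> card (insert i A) = quorum_size n k"
  by (cases rule: step.cases) auto

lemma RResp_step: "step n k \<delta> B enc dec s (RResp c m t v) s' \<Longrightarrow>
  \<exists>A i. cl s c = PDr t v A \<and> cnt s c = m \<and> (Node i, Cli c, Ack (c, cnt s c)) \<in> net s \<and> i < n \<and> card (insert i A) = quorum_size n k"
  by (cases rule: step.cases) auto

lemma cand_sub: "1 \<le> k \<Longrightarrow> (\<forall>j. Ls j \<subseteq> S) \<Longrightarrow> candidates k R Ls \<subseteq> fst ` S"
proof
  fix t assume k: "1 \<le> k" and L: "\<forall>j. Ls j \<subseteq> S" and t: "t \<in> candidates k R Ls"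
  then have "0 < card {j \<in> R. \<exists>e. (t,e) \<in> Ls j}" unfolding candidates_def by auto
  then have "{j \<in> R. \<exists>e. (t,e) \<in> Ls j} \<noteq> {}" using card_gt_0_iff by blast
  then obtain j e where "(t,e) \<in> Ls j" by auto
  then show "t \<in> fst ` S" using L by force
qed

lemma new_tag: assumes I: "Inv n \<delta> B enc s" and st: "step n k \<delta> B enc dec s a s'" and k: "1 \<le> k"
  and tt: "t \<notin> fst ` sig s" "t \<in> fst ` sig s'"
  shows "\<exists>c v R T. cl s c = GT v R T \<and> cl s' c = PDw t {} \<and> cnt s' c = cnt s c"
proof -
  have sne: "sig s' \<noteq> sig s" using tt by auto
  from st sne show ?thesis
  proof (cases rule: step.cases)
    case (cli_rtag_done c v R T i x t1 t2)
    have "fst ` sig s' \<subseteq> fst ` sig s \<union> {t2}" using cli_rtag_done by auto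
    then have "t = t2" using tt by auto
    then show ?thesis using cli_rtag_done by auto
  next
    case (cli_rdata_done c R Ls i L Ls' t' v)
    have "\<forall>j. Ls' j \<subseteq> sig s" using Inv_GD[OF I cli_rdata_done(3)] cli_rdata_done by auto
    then have cs: "candidates k (insert i R) Ls' \<subseteq> fst ` sig s" using cand_sub[OF k] by blast
    then have "finite (candidates k (insert i R) Ls')" using Inv_sig[OF I] finite_subset by blast
    then have "t' \<in> candidates k (insert i R) Ls'" using cli_rdata_done by auto
    then have "t' \<in> fst ` sig s" using cs by auto
    moreover have "fst ` sig s' \<subseteq> fst ` sig s \<union> {t'}" using cli_rdata_done by auto
    ultimately show ?thesis using tt by auto
  qed auto
qed

lemma TR_step:
  assumes I: "Inv n \<delta> B enc s" and st: "step n k \<delta> B enc dec s a s'"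
  and hm: "\<And>a c m L. (Node a, Cli c, RData (c,m) L) \<in> net s \<Longrightarrow> a<n \<Longrightarrow> a\<notin>B \<Longrightarrow> H a c m L"
  and hg: "\<And>c R Ls a. cl s c = GD R Ls \<Longrightarrow> a \<in> R \<Longrightarrow> a \<notin> B \<Longrightarrow> H a c (cnt s c) (Ls a)"
  and hnew: "\<And>a c m. a < n \<Longrightarrow> m \<le> cnt s c \<Longrightarrow> H a c m (lst s a)"
  and hsub: "\<And>a c m L. H a c m L \<Longrightarrow> a < n \<Longrightarrow> L \<subseteq> sig s"
  shows "(\<forall>a c m L. (Node a, Cli c, RData (c,m) L) \<in> net s' \<longrightarrow> a<n \<longrightarrow> a\<notin>B \<longrightarrow> H a c m L) \<and>
         (\<forall>c R Ls a. cl s' c = GD R Ls \<longrightarrow> a \<in> R \<longrightarrow> a \<notin> B \<longrightarrow> H a c (cnt s' c) (Ls a))"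
  using st
proof (cases rule: step.cases)
  case (node_qdata i src oi)
  have "H i c m (lst s i)" if "src = Cli c" "oi = (c,m)" for c m
    using Inv_QData[OF I, of c "Node i" oi] node_qdata that hnew by auto
  then show ?thesis using node_qdata hm hg by auto
next
  case (cli_rdata_wait c0 R0 Ls0 i L)
  have Hi: "i \<notin> B \<Longrightarrow> H i c0 (cnt s c0) L" using hm cli_rdata_wait by auto
  then have "i \<notin> B \<Longrightarrow> L \<subseteq> sig s" using hsub[of i c0 "cnt s c0" L] cli_rdata_wait by auto
  then have "i \<notin> B \<Longrightarrow> L \<inter> sig s = L" by auto
  then show ?thesis using Hi cli_rdata_wait hm hg by auto
qed (use hm hg in \<open>auto split: if_splits\<close>)

lemma cross: "\<not> P x \<Longrightarrow> P y \<Longrightarrow> x \<le> y \<Longrightarrow> \<exists>d. x \<le> d \<and> d < y \<and> \<not> P d \<and> P (Suc d)"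
proof (induction y)
  case 0 then show ?case by auto
next
  case (Suc y)
  show ?case
  proof (cases "P y")
    case True
    then have "x \<le> y" using Suc by (cases "x = Suc y") auto
    then show ?thesis using Suc True by (metis less_Suc_eq)
  next
    case False
    show ?thesis
    proof (cases "x = Suc y")
      case True then show ?thesis using Suc by auto
    next
      case False
      then have "x \<le> y" using Suc by auto
      then show ?thesis using Suc \<open>\<not> P y\<close> by (intro exI[of _ y]) auto
    qed
  qed
qed

lemma phase1: "phase st = 1 \<Longrightarrow> (\<exists>v R T. st = GT v R T) \<or> (\<exists>R Ls. st = GD R Ls)"
  by (cases st) auto

lemma phase2: "phase st = 2 \<Longrightarrow> (\<exists>t A. st = PDw t A) \<or> (\<exists>t v A. st = PDr t v A)"
  by (cases st) auto

lemma crank_eq: "crank s c = 5 * m + p \<Longrightarrow> p < 5 \<Longrightarrow> cnt s c = m \<and> phase (cl s c) = p"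
  using phase_le4[of "cl s c"] unfolding crank_def by presburger

locale run =
  fixes n k \<delta> :: nat and B :: "nat set" and enc :: "'v \<Rightarrow> nat \<Rightarrow> 'e" and dec :: "'e set \<Rightarrow> 'v"
    and t0 :: "('w::linorder) tag" and v0 :: 'v and as :: "('w,'v) act list"
    and ss :: "('w,'v,'e) gstate list"
  assumes len: "length ss = Suc (length as)"
    and init: "ss ! 0 = init_state n B enc t0 v0"
    and stp: "\<And>x. x < length as \<Longrightarrow> step n k \<delta> B enc dec (ss ! x) (as ! x) (ss ! Suc x)"
begin

abbreviation "N \<equiv> length as"

lemma Inv_at: "x \<le> N \<Longrightarrow> Inv n \<delta> B enc (ss ! x)"
proof (induction x)
  case 0 then show ?case using init Inv_init by simp
next
  case (Suc x) then show ?case using Inv_step stp by (metis Suc_le_eq less_imp_le)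
qed

lemma mono_gen:
  fixes f :: "('w,'v,'e) gstate \<Rightarrow> 'a::order"
  assumes st: "\<And>s a s'. step n k \<delta> B enc dec s a s' \<Longrightarrow> f s \<le> f s'" and xy: "x \<le> y" and yN: "y \<le> N"
  shows "f (ss ! x) \<le> f (ss ! y)"
  using xy yN
proof (induction y rule: dec_induct)
  case base then show ?case by simp
next
  case (step y)
  then show ?case using st[OF stp[of y]] by (meson Suc_le_eq dual_order.trans less_imp_le)
qed

lemma crank_le: "x \<le> y \<Longrightarrow> y \<le> N \<Longrightarrow> crank (ss ! x) c \<le> crank (ss ! y) c"
  using mono_gen[of "\<lambda>s. crank s c"] crank_mono by blast

lemma sig_le: "x \<le> y \<Longrightarrow> y \<le> N \<Longrightarrow> sig (ss ! x) \<subseteq> sig (ss ! y)"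
  using mono_gen[of "\<lambda>s. sig s"] sig_mono by blast

lemma cnt_le: "x \<le> y \<Longrightarrow> y \<le> N \<Longrightarrow> cnt (ss ! x) c \<le> cnt (ss ! y) c"
proof -
  assume "x \<le> y" "y \<le> N"
  then have "crank (ss ! x) c \<le> crank (ss ! y) c" by (rule crank_le)
  then show ?thesis using phase_le4[of "cl (ss!x) c"] phase_le4[of "cl (ss!y) c"] unfolding crank_def by linarith
qed

lemma good_le: "x \<le> y \<Longrightarrow> y \<le> N \<Longrightarrow> good \<delta> t (lst (ss ! x) a) \<Longrightarrow> good \<delta> t (lst (ss ! y) a)"
proof (induction y rule: dec_induct)
  case base then show ?case by simp
next
  case (step y)
  then show ?case using good_step[OF Inv_at stp[of y]] by simp
qed

lemma chain:
  assumes Qs: "\<And>s a s'. step n k \<delta> B enc dec s a s' \<Longrightarrow> Q (cl s c) \<Longrightarrow> crank s' c = crank s c \<Longrightarrow> Q (cl s' c)"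
    and Qx: "Q (cl (ss ! x) c)" and xy: "x \<le> y" and yN: "y \<le> N" and eq: "crank (ss ! x) c = crank (ss ! y) c"
  shows "Q (cl (ss ! y) c)"
proof -
  have "y \<le> N \<longrightarrow> crank (ss ! x) c = crank (ss ! y) c \<longrightarrow> Q (cl (ss ! y) c)"
    using xy
  proof (induction y rule: dec_induct)
    case base then show ?case using Qx by simp
  next
    case (step y)
    show ?case
    proof (intro impI)
      assume yN': "Suc y \<le> N" and e: "crank (ss ! x) c = crank (ss ! Suc y) c"
      have "crank (ss ! x) c \<le> crank (ss ! y) c" using crank_le step yN' by simp
      moreover have "crank (ss ! y) c \<le> crank (ss ! Suc y) c" using crank_le yN' by simp
      ultimately have e1: "crank (ss ! x) c = crank (ss ! y) c" and e2: "crank (ss ! Suc y) c = crank (ss ! y) c"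
        using e by auto
      have "Q (cl (ss ! y) c)" using step e1 yN' by simp
      moreover have sy: "step n k \<delta> B enc dec (ss ! y) (as ! y) (ss ! Suc y)" using stp yN' by simp
      ultimately show "Q (cl (ss ! Suc y) c)" using Qs[OF sy _ e2] by simp
    qed
  qed
  then show ?thesis using yN eq by blast
qed

definition Hx :: "nat \<Rightarrow> nat \<Rightarrow> 'w \<Rightarrow> nat \<Rightarrow> ('w,'e) item set \<Rightarrow> bool" where
  "Hx x a c m L \<longleftrightarrow> (\<exists>\<tau><x. L = lst (ss ! \<tau>) a \<and> m \<le> cnt (ss ! \<tau>) c)"

lemma TR_at: "x \<le> N \<Longrightarrow>
   (\<forall>a c m L. (Node a, Cli c, RData (c,m) L) \<in> net (ss ! x) \<longrightarrow> a<n \<longrightarrow> a\<notin>B \<longrightarrow> Hx x a c m L) \<and>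
   (\<forall>c R Ls a. cl (ss ! x) c = GD R Ls \<longrightarrow> a \<in> R \<longrightarrow> a \<notin> B \<longrightarrow> Hx x a c (cnt (ss ! x) c) (Ls a))"
proof (induction x)
  case 0 then show ?case using init by (simp add: init_state_def)
next
  case (Suc x)
  then have xN: "x < N" by simp
  have w: "Hx x a c m L \<Longrightarrow> Hx (Suc x) a c m L" for a c m L unfolding Hx_def using less_SucI by blast
  show ?case
  proof (rule TR_step[OF Inv_at stp[OF xN]])
    show "x \<le> N" using xN by simp
    show "Hx (Suc x) a c m L" if "(Node a, Cli c, RData (c, m) L) \<in> net (ss ! x)" "a < n" "a \<notin> B" for a c m L
      using Suc xN that w by auto
    show "Hx (Suc x) a c (cnt (ss ! x) c) (Ls a)" if "cl (ss ! x) c = GD R Ls" "a \<in> R" "a \<notin> B" for c R Ls a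
      using Suc xN that w by auto
    show "Hx (Suc x) a c m (lst (ss ! x) a)" if "a < n" "m \<le> cnt (ss ! x) c" for a c m
      unfolding Hx_def using that by auto
    show "L \<subseteq> sig (ss ! x)" if h: "Hx (Suc x) a c m L" "a < n" for a c m L
    proof -
      obtain \<tau> where "\<tau> < Suc x" "L = lst (ss ! \<tau>) a" using h unfolding Hx_def by auto
      moreover have "lst (ss ! \<tau>) a \<subseteq> sig (ss ! \<tau>)" using Inv_lst_sig[OF Inv_at] h calculation xN by simp
      moreover have "sig (ss ! \<tau>) \<subseteq> sig (ss ! x)" using sig_le calculation xN by simp
      ultimately show ?thesis by blast
    qed
  qed
qed

end

lemma q_le_n: "k \<le> n \<Longrightarrow> quorum_size n k \<le> n"
proof -
  assume kn: "k \<le> n"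
  have "(2 * real n + real k) / 3 \<le> real n" using kn by simp
  then have "\<lceil>(2 * real n + real k) / 3\<rceil> \<le> int n" by (simp add: ceiling_le_iff)
  then show ?thesis unfolding quorum_size_def using kn by simp
qed

lemma q_ge: "real (quorum_size n k) \<ge> (2 * real n + real k) / 3"
proof -
  have "(2 * real n + real k) / 3 \<le> real_of_int \<lceil>(2 * real n + real k) / 3\<rceil>" by (rule le_of_int_ceiling)
  moreover have "0 \<le> \<lceil>(2 * real n + real k) / 3\<rceil>" by simp
  ultimately show ?thesis unfolding quorum_size_def by simp
qed

lemma quorum_inter:
  assumes R: "R \<subseteq> {..<n}" and A: "A \<subseteq> {..<n}" and cR: "card R = quorum_size n k" and cA: "quorum_size n k \<le> card A"
    and cb: "card B \<le> b" and br: "real b < (real n - real k) / 3" and fB: "finite B"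
  shows "k \<le> card ((R \<inter> A) - B)"
proof -
  have fR: "finite R" and fA: "finite A" using R A finite_subset by auto
  have "card (R \<union> A) \<le> n" using R A by (metis card_lessThan card_mono finite_lessThan le_sup_iff)
  moreover have "card R + card A = card (R \<union> A) + card (R \<inter> A)" using card_Un_Int[OF fR fA] .
  ultimately have i1: "card R + card A \<le> n + card (R \<inter> A)" by linarith
  have i2: "card (R \<inter> A) - card B \<le> card ((R \<inter> A) - B)" using diff_card_le_card_Diff[OF fB] by blast
  have q: "real (quorum_size n k) \<ge> (2 * real n + real k) / 3" by (rule q_ge)
  have "real (card R) + real (card A) \<le> real n + real (card (R \<inter> A))" using i1 by linarith
  then have "real (card (R \<inter> A)) \<ge> 2 * ((2 * real n + real k) / 3) - real n" using cR cA q by linarith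
  moreover have "real (card B) \<le> real b" using cb by simp
  ultimately have h1: "3 * real (card (R \<inter> A)) \<ge> real n + 2 * real k" "real (card B) \<le> real b" by (auto simp: field_simps)
  have h2: "3 * real b < real n - real k" using br by simp
  have "real (card (R \<inter> A)) - real (card B) > real k" using h1 h2 by linarith
  then have "card (R \<inter> A) - card B > k" by linarith
  then show ?thesis using i2 by linarith
qed

context run begin

definition QG :: "nat \<Rightarrow> 'w tag \<Rightarrow> bool" where
  "QG x t \<longleftrightarrow> (\<exists>A \<subseteq> {..<n}. quorum_size n k \<le> card A \<and> (\<forall>a\<in>A-B. good \<delta> t (lst (ss ! x) a)))"

lemma QG_mono: "QG x t \<Longrightarrow> x \<le> y \<Longrightarrow> y \<le> N \<Longrightarrow> QG y t"
  unfolding QG_def using good_le by blast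

lemma crank_val: "crank s c = 5 * cnt s c + phase (cl s c)"
  unfolding crank_def by simp

lemma resp_QG:
  assumes x: "x < N" and st: "cl (ss ! x) c = PDw t A \<or> (\<exists>v. cl (ss ! x) c = PDr t v A)"
    and m: "(Node i, Cli c, Ack (c, cnt (ss ! x) c)) \<in> net (ss ! x)" and i: "i < n"
    and cA: "card (insert i A) = quorum_size n k"
  shows "QG x t"
proof -
  have I: "Inv n \<delta> B enc (ss ! x)" using Inv_at x by simp
  have A: "A \<subseteq> {..<n} \<and> (\<forall>a\<in>A-B. good \<delta> t (lst (ss ! x) a))"
    using st Inv_PDw[OF I] Inv_PDr[OF I] by blast
  have gi: "i \<notin> B \<Longrightarrow> good \<delta> t (lst (ss ! x) i)"
  proof -
    assume iB: "i \<notin> B"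
    have "pgood \<delta> (cl (ss ! x) c) (lst (ss ! x) i)" using Inv_ack[OF I m i iB] by simp
    then show ?thesis using st by auto
  qed
  show ?thesis unfolding QG_def
    by (rule exI[of _ "insert i A"]) (use A gi i cA in auto)
qed

lemma WResp_QG: assumes x: "x < N" and a: "as ! x = WResp c m"
  shows "\<exists>t A. cl (ss ! x) c = PDw t A \<and> cnt (ss ! x) c = m \<and> QG x t"
proof -
  obtain t A i where h: "cl (ss ! x) c = PDw t A" "cnt (ss ! x) c = m" "(Node i, Cli c, Ack (c, cnt (ss ! x) c)) \<in> net (ss ! x)"
    "i < n" "card (insert i A) = quorum_size n k"
    using WResp_step[OF stp[OF x, unfolded a]] by blast
  then show ?thesis using resp_QG[OF x _ h(3,4,5)] by blast
qed

lemma RResp_QG: assumes x: "x < N" and a: "as ! x = RResp c m t v"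
  shows "\<exists>A. cl (ss ! x) c = PDr t v A \<and> cnt (ss ! x) c = m \<and> QG x t"
proof -
  obtain A i where h: "cl (ss ! x) c = PDr t v A" "cnt (ss ! x) c = m" "(Node i, Cli c, Ack (c, cnt (ss ! x) c)) \<in> net (ss ! x)"
    "i < n" "card (insert i A) = quorum_size n k"
    using RResp_step[OF stp[OF x, unfolded a]] by blast
  then show ?thesis using resp_QG[OF x _ h(3,4,5)] by blast
qed

lemma inv_cnt: "y' < N \<Longrightarrow> inv_at as (c, m) y' \<Longrightarrow> cnt (ss ! y') c < m \<and> cnt (ss ! Suc y') c = m"
  unfolding inv_at_def using WInv_step RInv_step stp by (metis fst_conv snd_conv)

lemma resp_crank: "y < N \<Longrightarrow> resp_at as (c, m) y \<Longrightarrow> crank (ss ! y) c = 5 * m + 2"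
proof -
  assume y: "y < N" and r: "resp_at as (c, m) y"
  show ?thesis
  proof (cases "as ! y = WResp c m")
    case True
    then obtain t A where "cl (ss ! y) c = PDw t A" "cnt (ss ! y) c = m" using WResp_QG[OF y] by blast
    then show ?thesis by (simp add: crank_val)
  next
    case False
    then obtain t v where "as ! y = RResp c m t v" using r unfolding resp_at_def by auto
    then obtain A where "cl (ss ! y) c = PDr t v A" "cnt (ss ! y) c = m" using RResp_QG[OF y] by blast
    then show ?thesis by (simp add: crank_val)
  qed
qed

lemma inv_unique: "x < N \<Longrightarrow> x' < N \<Longrightarrow> cnt (ss ! x) c < m \<Longrightarrow> cnt (ss ! Suc x) c = m \<Longrightarrow>
   cnt (ss ! x') c < m \<Longrightarrow> cnt (ss ! Suc x') c = m \<Longrightarrow> x = x'"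
proof (rule ccontr)
  assume h: "x < N" "x' < N" "cnt (ss ! x) c < m" "cnt (ss ! Suc x) c = m" "cnt (ss ! x') c < m" "cnt (ss ! Suc x') c = m" "x \<noteq> x'"
  show False
  proof (cases "x < x'")
    case True
    then have "cnt (ss ! Suc x) c \<le> cnt (ss ! x') c" using cnt_le[of "Suc x" x' c] h by simp
    then show False using h by simp
  next
    case False
    then have "cnt (ss ! Suc x') c \<le> cnt (ss ! x) c" using cnt_le[of "Suc x'" x c] h by simp
    then show False using h by simp
  qed
qed

lemma main:
  assumes k1: "1 \<le> k" and kn: "k \<le> n" and Bn: "B \<subseteq> {..<n}" and cb: "card B \<le> b"
    and br: "real b < (real n - real k) / 3"
    and bc: "bounded_concurrency \<delta> as"
    and ij: "i < j" and jl: "j < l" and lN: "l < N"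
    and ai: "as ! i = RResp c1 m1 t1 v1" and aj: "as ! j = RInv c2 m2" and al: "as ! l = RResp c2 m2 t2 v2"
  shows "t1 \<le> t2"
proof -
  have n1: "1 \<le> n" using k1 kn by simp
  have iN: "i < N" and jN: "j < N" using ij jl lN by auto
  have fB: "finite B" using Bn finite_subset by blast
  obtain A1 where A1: "cl (ss ! i) c1 = PDr t1 v1 A1" "QG i t1" using RResp_QG[OF iN ai] by blast
  have t1sig: "t1 \<in> fst ` sig (ss ! i)"
    using Inv_PDr[OF Inv_at A1(1)] n1 iN by force
  define G where "G = {t \<in> fst ` sig (ss ! j). QG j t}"
  have finG: "finite G" unfolding G_def using Inv_sig[OF Inv_at] jN by simp
  have "sig (ss ! i) \<subseteq> sig (ss ! j)" using sig_le ij jN by simp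
  then have "t1 \<in> fst ` sig (ss ! j)" using t1sig by blast
  then have t1G: "t1 \<in> G" unfolding G_def using A1(2) QG_mono ij jN by auto
  have t0G: "t0 \<in> G"
  proof -
    have "QG 0 t0" unfolding QG_def
      by (rule exI[of _ "{..<n}"]) (simp add: q_le_n[OF kn] init init_state_def good_def)
    then have "QG j t0" using QG_mono jN by simp
    moreover have "(t0, enc v0 0) \<in> sig (ss ! 0)" using n1 unfolding init init_state_def by auto
    then have "t0 \<in> fst ` sig (ss ! 0)" by (metis fst_conv image_eqI)
    then have "t0 \<in> fst ` sig (ss ! j)" using sig_le[of 0 j] jN by auto
    ultimately show ?thesis unfolding G_def by simp
  qed
  define ts where "ts = Max G"
  have tsG: "ts \<in> G" unfolding ts_def using finG t1G Max_in by blast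
  have t1ts: "t1 \<le> ts" and t0ts: "t0 \<le> ts" unfolding ts_def using finG t1G t0G by auto
  have Gle: "t \<le> ts" if "t \<in> G" for t unfolding ts_def using finG that by auto
  obtain As where As: "As \<subseteq> {..<n}" "quorum_size n k \<le> card As" "\<forall>a\<in>As-B. good \<delta> ts (lst (ss ! j) a)"
    using tsG unfolding G_def QG_def by blast
  have jst: "cnt (ss ! j) c2 < m2" "cnt (ss ! Suc j) c2 = m2" "cl (ss ! Suc j) c2 = GD {} (\<lambda>_. {})"
    using RInv_step[OF stp[OF jN, unfolded aj]] by auto
  have crj: "crank (ss ! Suc j) c2 = 5 * m2 + 1" using jst by (simp add: crank_val)
  obtain Al where Al: "cl (ss ! l) c2 = PDr t2 v2 Al" "cnt (ss ! l) c2 = m2" using RResp_QG[OF lN al] by blast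
  have crl: "crank (ss ! l) c2 = 5 * m2 + 2" using Al by (simp add: crank_val)
  obtain d where d: "Suc j \<le> d" "d < l" "\<not> 5 * m2 + 2 \<le> crank (ss ! d) c2" "5 * m2 + 2 \<le> crank (ss ! Suc d) c2"
    using cross[of "\<lambda>x. 5 * m2 + 2 \<le> crank (ss ! x) c2" "Suc j" l] crj crl jl by auto
  have dN: "d < N" using d lN by simp
  have crd: "crank (ss ! d) c2 = 5 * m2 + 1" using crank_le[of "Suc j" d c2] d crj dN by simp
  have "\<exists>R Ls. cl (ss ! d) c2 = GD R Ls"
    by (rule chain[of "\<lambda>st. \<exists>R Ls. st = GD R Ls" c2 "Suc j" d]) (use same_GD jst d dN crj crd in auto)
  then obtain R Ls where dGD: "cl (ss ! d) c2 = GD R Ls" by blast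
  have cntd: "cnt (ss ! d) c2 = m2" using crank_eq[of "ss ! d" c2 m2 1] crd by simp
  have crd1: "crank (ss ! Suc d) c2 = 5 * m2 + 2" using crank_le[of "Suc d" l c2] d crl lN by simp
  then have ph: "phase (cl (ss ! Suc d) c2) = 2" using crank_eq[of "ss ! Suc d" c2 m2 2] by simp
  have "\<exists>t v A. cl (ss ! Suc d) c2 = PDr t v A"
    using phase2[OF ph] GD_noPDw[OF stp[OF dN] dGD] by blast
  then obtain t v A where dPDr: "cl (ss ! Suc d) c2 = PDr t v A" by blast
  obtain i0 L0 where G0: "(Node i0, Cli c2, RData (c2, cnt (ss ! d) c2) L0) \<in> net (ss ! d)" "i0 < n" "i0 \<notin> R"
     "card (insert i0 R) = quorum_size n k"
     "candidates k (insert i0 R) (Ls(i0 := L0 \<inter> sig (ss ! d))) \<noteq> {}"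
     "t = Max (candidates k (insert i0 R) (Ls(i0 := L0 \<inter> sig (ss ! d))))"
    using GD_PDr[OF stp[OF dN] dGD dPDr] by blast
  have "\<exists>v A. cl (ss ! l) c2 = PDr t v A"
  proof (rule chain[of "\<lambda>st. \<exists>v A. st = PDr t v A" c2 "Suc d" l])
    fix s a s' assume h: "step n k \<delta> B enc dec s a s'" "\<exists>v A. cl s c2 = PDr t v A" "crank s' c2 = crank s c2"
    then show "\<exists>v A. cl s' c2 = PDr t v A" using same_PDr[OF h(1)] by blast
  qed (use dPDr d lN crd1 crl in auto)
  then have tt2: "t = t2" using Al by auto
  define R' where "R' = insert i0 R"
  define Ls' where "Ls' = Ls(i0 := L0 \<inter> sig (ss ! d))"
  have IGd: "R \<subseteq> {..<n} \<and> (\<forall>a. Ls a \<subseteq> sig (ss ! d))" using Inv_GD[OF Inv_at dGD] dN by simp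
  have R'n: "R' \<subseteq> {..<n}" using IGd G0 R'_def by auto
  have Ls'sig: "\<forall>a. Ls' a \<subseteq> sig (ss ! d)" using IGd Ls'_def by auto
  have cR': "card R' = quorum_size n k" using G0 R'_def by simp
  \<comment> \<open>responses come from after the invocation\<close>
  have resp: "\<exists>\<tau><d. Ls' a = lst (ss ! \<tau>) a \<and> m2 \<le> cnt (ss ! \<tau>) c2" if a: "a \<in> R'" "a \<notin> B" for a
  proof (cases "a = i0")
    case True
    have "Hx d i0 c2 m2 L0" using TR_at[of d] dN G0 cntd a True by auto
    then obtain \<tau> where \<tau>: "\<tau> < d" "L0 = lst (ss ! \<tau>) i0" "m2 \<le> cnt (ss ! \<tau>) c2" unfolding Hx_def by blast
    have "L0 \<subseteq> sig (ss ! \<tau>)" using Inv_lst_sig[OF Inv_at] \<tau> G0 dN by simp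
    then have "L0 \<subseteq> sig (ss ! d)" using sig_le[of \<tau> d] \<tau> dN by auto
    then have "Ls' a = L0" unfolding Ls'_def using True by auto
    then show ?thesis using \<tau> True by auto
  next
    case False
    then have aR: "a \<in> R" using a R'_def by auto
    have "Hx d a c2 (cnt (ss ! d) c2) (Ls a)" using TR_at[of d] dN dGD aR a by auto
    then show ?thesis unfolding Hx_def Ls'_def using False cntd by auto
  qed
  have key: "ts \<in> fst ` Ls' a" if a: "a \<in> R' \<inter> As" "a \<notin> B" for a
  proof -
    obtain \<tau> where \<tau>: "\<tau> < d" "Ls' a = lst (ss ! \<tau>) a" "m2 \<le> cnt (ss ! \<tau>) c2" using resp a by blast
    have j\<tau>: "j < \<tau>"
    proof (rule ccontr)
      assume "\<not> j < \<tau>"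
      then have "cnt (ss ! \<tau>) c2 \<le> cnt (ss ! j) c2" using cnt_le jN by simp
      then show False using \<tau> jst by simp
    qed
    have \<tau>N: "\<tau> < N" using \<tau> dN by simp
    have gj: "good \<delta> ts (lst (ss ! j) a)" using As a by blast
    have g: "good \<delta> ts (lst (ss ! \<tau>) a)" using good_le[OF _ _ gj] j\<tau> \<tau>N by simp
    show ?thesis
    proof (rule ccontr)
      assume nin: "ts \<notin> fst ` Ls' a"
      then have big: "\<delta> + 1 \<le> card (lst (ss ! \<tau>) a)" "\<forall>x\<in>lst (ss ! \<tau>) a. ts < fst x"
        using g \<tau> unfolding good_def by auto
      have an: "a < n" using a R'n by auto
      define LL where "LL = lst (ss ! \<tau>) a"
      define gen where "gen tg w \<longleftrightarrow> (\<exists>p. p < \<tau> \<and> (\<exists>v' R'' T'. cl (ss ! p) (fst w) = GT v' R'' T') \<and>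
          cl (ss ! Suc p) (fst w) = PDw tg {} \<and> cnt (ss ! p) (fst w) = snd w \<and> cnt (ss ! Suc p) (fst w) = snd w
          \<and> tg \<in> fst ` sig (ss ! Suc p))" for tg w
      define W where "W = {w. write_op as w \<and> concurrent as w (c2, m2)}"
      have finW: "finite W"
      proof -
        have "W \<subseteq> (\<lambda>x. case as ! x of WInv c m v \<Rightarrow> (c, m) | _ \<Rightarrow> undefined) ` {..<N}"
        proof
          fix w assume "w \<in> W"
          then obtain x v' where "x < N" "as ! x = WInv (fst w) (snd w) v'" unfolding W_def write_op_def by blast
          then show "w \<in> (\<lambda>x. case as ! x of WInv c m v \<Rightarrow> (c, m) | _ \<Rightarrow> undefined) ` {..<N}"
            by (intro image_eqI[of _ _ x]) auto
        qed
        then show ?thesis using finite_subset by blast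
      qed
      have "read_op as (c2, m2)" unfolding read_op_def using aj jN by auto
      then have cW: "card W \<le> \<delta>" using bc unfolding bounded_concurrency_def W_def by blast
      have genex: "\<exists>w. gen tg w" if tg: "tg \<in> fst ` LL" for tg
      proof -
        have tsig: "tg \<in> fst ` sig (ss ! \<tau>)" using tg Inv_lst_sig[OF Inv_at, of \<tau> a] \<tau>N an unfolding LL_def by auto
        have "ts < tg" using tg big unfolding LL_def by auto
        then have "tg \<noteq> t0" using t0ts by auto
        then have "tg \<notin> fst ` sig (ss ! 0)" by (auto simp: init init_state_def)
        then obtain p where p: "0 \<le> p" "p < \<tau>" "tg \<notin> fst ` sig (ss ! p)" "tg \<in> fst ` sig (ss ! Suc p)"
          using cross[of "\<lambda>x. tg \<in> fst ` sig (ss ! x)" 0 \<tau>] tsig by blast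
        have pN: "p < N" using p \<tau>N by simp
        obtain c v' R'' T' where h: "cl (ss ! p) c = GT v' R'' T'" "cl (ss ! Suc p) c = PDw tg {}" "cnt (ss ! Suc p) c = cnt (ss ! p) c"
          using new_tag[OF Inv_at[OF less_imp_le[OF pN]] stp[OF pN] k1 p(3) p(4)] by blast
        show ?thesis unfolding gen_def
          by (rule exI[of _ "(c, cnt (ss ! p) c)"]) (use p h in auto)
      qed
      have gcr: "crank (ss ! p) (fst w) = 5 * snd w + 1 \<and> crank (ss ! Suc p) (fst w) = 5 * snd w + 2"
        if "(\<exists>v' R'' T'. cl (ss ! p) (fst w) = GT v' R'' T')" "cl (ss ! Suc p) (fst w) = PDw tg {}"
           "cnt (ss ! p) (fst w) = snd w" "cnt (ss ! Suc p) (fst w) = snd w" for p w tg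
        using that by (auto simp: crank_val)
      have genInj: "tg = tg'" if g1: "gen tg w" and g2: "gen tg' w" for tg tg' w
      proof -
        obtain p where p: "p < \<tau>" "\<exists>v' R'' T'. cl (ss ! p) (fst w) = GT v' R'' T'" "cl (ss ! Suc p) (fst w) = PDw tg {}"
          "cnt (ss ! p) (fst w) = snd w" "cnt (ss ! Suc p) (fst w) = snd w" using g1 unfolding gen_def by blast
        obtain p' where p': "p' < \<tau>" "\<exists>v' R'' T'. cl (ss ! p') (fst w) = GT v' R'' T'" "cl (ss ! Suc p') (fst w) = PDw tg' {}"
          "cnt (ss ! p') (fst w) = snd w" "cnt (ss ! Suc p') (fst w) = snd w" using g2 unfolding gen_def by blast
        have c1: "crank (ss ! p) (fst w) = 5 * snd w + 1" "crank (ss ! Suc p) (fst w) = 5 * snd w + 2"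
          using gcr[OF p(2-5)] by auto
        have c2: "crank (ss ! p') (fst w) = 5 * snd w + 1" "crank (ss ! Suc p') (fst w) = 5 * snd w + 2"
          using gcr[OF p'(2-5)] by auto
        have "p = p'"
        proof (rule ccontr)
          assume "p \<noteq> p'"
          then consider "p < p'" | "p' < p" by linarith
          then show False
          proof cases
            case 1
            then have "crank (ss ! Suc p) (fst w) \<le> crank (ss ! p') (fst w)" using crank_le p' \<tau>N by simp
            then show False using c1 c2 by simp
          next
            case 2
            then have "crank (ss ! Suc p') (fst w) \<le> crank (ss ! p) (fst w)" using crank_le p \<tau>N by simp
            then show False using c1 c2 by simp
          qed
        qed
        then show ?thesis using p p' by simp
      qed
      have genW: "w \<in> W" if g: "gen tg w" and tgt: "ts < tg" for tg w
      proof -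
        obtain c m where w: "w = (c, m)" by (cases w)
        obtain p where p: "p < \<tau>" "\<exists>v' R'' T'. cl (ss ! p) c = GT v' R'' T'" "cl (ss ! Suc p) c = PDw tg {}"
          "cnt (ss ! p) c = m" "cnt (ss ! Suc p) c = m" "tg \<in> fst ` sig (ss ! Suc p)" using g w unfolding gen_def by auto
        have pN: "p < N" using p \<tau>N by simp
        have crp: "crank (ss ! p) c = 5 * m + 1" "crank (ss ! Suc p) c = 5 * m + 2"
          using gcr[of p w tg] p w by auto
        have wo: "write_op as (c, m)"
        proof -
          have cr0: "crank (ss ! 0) c = 3" by (simp add: init init_state_def crank_val)
          have "crank (ss ! 0) c \<le> crank (ss ! p) c" using crank_le pN by simp
          then have m1: "1 \<le> m" using cr0 crp by simp
          obtain p0 where p0: "0 \<le> p0" "p0 < p" "\<not> 5 * m + 1 \<le> crank (ss ! p0) c" "5 * m + 1 \<le> crank (ss ! Suc p0) c"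
            using cross[of "\<lambda>x. 5 * m + 1 \<le> crank (ss ! x) c" 0 p] cr0 crp m1 by auto
          have p0N: "p0 < N" using p0 pN by simp
          have "crank (ss ! Suc p0) c \<le> crank (ss ! p) c" using crank_le p0 pN by simp
          then have cr1: "crank (ss ! Suc p0) c = 5 * m + 1" using p0 crp by simp
          then have ph1: "phase (cl (ss ! Suc p0) c) = 1" and cm: "cnt (ss ! Suc p0) c = m"
            using crank_eq[of "ss ! Suc p0" c m 1] by auto
          have notGD: "\<not> (\<exists>R'' Ls''. cl (ss ! Suc p0) c = GD R'' Ls'')"
          proof
            assume "\<exists>R'' Ls''. cl (ss ! Suc p0) c = GD R'' Ls''"
            then have "\<exists>R'' Ls''. cl (ss ! p) c = GD R'' Ls''"
            proof (rule chain[of "\<lambda>st. \<exists>R Ls. st = GD R Ls" c "Suc p0" p, rotated])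
              fix s a s' assume h: "step n k \<delta> B enc dec s a s'" "\<exists>R Ls. cl s c = GD R Ls" "crank s' c = crank s c"
              then show "\<exists>R Ls. cl s' c = GD R Ls" using same_GD[OF h(1)] by blast
            qed (use p0 pN cr1 crp in auto)
            then show False using p by auto
          qed
          then obtain v' R'' T' where gt: "cl (ss ! Suc p0) c = GT v' R'' T'" using phase1[OF ph1] by blast
          have "crank (ss ! p0) c < crank (ss ! Suc p0) c" using p0 cr1 by simp
          then obtain v'' where "as ! p0 = WInv c (cnt (ss ! Suc p0) c) v''" using GT_up[OF stp[OF p0N] _ gt] by blast
          then show ?thesis unfolding write_op_def using p0N cm by auto
        qed
        have np1: "\<not> precedes as (c, m) (c2, m2)"
        proof
          assume "precedes as (c, m) (c2, m2)"
          then obtain y y' where y: "y < y'" "y' < N" "resp_at as (c, m) y" "inv_at as (c2, m2) y'"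
            unfolding precedes_def by blast
          have yN: "y < N" using y by simp
          have "cnt (ss ! y') c2 < m2 \<and> cnt (ss ! Suc y') c2 = m2" using inv_cnt y by blast
          then have "y' = j" using inv_unique[of y' j c2 m2] y jN jst by auto
          have cry: "crank (ss ! y) c = 5 * m + 2" using resp_crank yN y by blast
          have py: "Suc p \<le> y"
          proof (rule ccontr)
            assume "\<not> Suc p \<le> y"
            then have "crank (ss ! y) c \<le> crank (ss ! p) c" using crank_le pN by simp
            then show False using cry crp by simp
          qed
          have "\<exists>A''. cl (ss ! y) c = PDw tg A''"
          proof (rule chain[of "\<lambda>st. \<exists>A. st = PDw tg A" c "Suc p" y, rotated])
            fix s a s' assume h: "step n k \<delta> B enc dec s a s'" "\<exists>A. cl s c = PDw tg A" "crank s' c = crank s c"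
            then show "\<exists>A. cl s' c = PDw tg A" using same_PDw[OF h(1)] by blast
          qed (use p py yN cry crp in auto)
          then obtain A'' where yA: "cl (ss ! y) c = PDw tg A''" by blast
          have "as ! y = WResp c m"
          proof (rule ccontr)
            assume "as ! y \<noteq> WResp c m"
            then obtain t' v' where "as ! y = RResp c m t' v'" using y unfolding resp_at_def by auto
            then show False using RResp_QG[OF yN] yA by auto
          qed
          then obtain t' A' where "cl (ss ! y) c = PDw t' A'" "QG y t'" using WResp_QG[OF yN] by blast
          then have "QG y tg" using yA by simp
          then have "QG j tg" using QG_mono y \<open>y' = j\<close> jN by simp
          moreover have "sig (ss ! Suc p) \<subseteq> sig (ss ! j)" using sig_le py y \<open>y' = j\<close> jN by simp
          then have "tg \<in> fst ` sig (ss ! j)" using p by blast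
          ultimately have "tg \<in> G" unfolding G_def by simp
          then show False using Gle tgt by fastforce
        qed
        have np2: "\<not> precedes as (c2, m2) (c, m)"
        proof
          assume "precedes as (c2, m2) (c, m)"
          then obtain y y' where y: "y < y'" "y' < N" "resp_at as (c2, m2) y" "inv_at as (c, m) y'"
            unfolding precedes_def by blast
          have yN: "y < N" using y by simp
          have "cnt (ss ! y') c < m" using inv_cnt y by blast
          then have "y' < p"
          proof -
            assume h: "cnt (ss ! y') c < m"
            show "y' < p"
            proof (rule ccontr)
              assume "\<not> y' < p"
              then have "cnt (ss ! p) c \<le> cnt (ss ! y') c" using cnt_le y by simp
              then show False using h p by simp
            qed
          qed
          have cry: "crank (ss ! y) c2 = 5 * m2 + 2" using resp_crank yN y by blast
          have "y \<le> d" using y \<open>y' < p\<close> p \<tau> by simp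
          then have "crank (ss ! y) c2 \<le> crank (ss ! d) c2" using crank_le dN by simp
          then show False using cry crd by simp
        qed
        show ?thesis unfolding W_def concurrent_def using w wo np1 np2 by simp
      qed
      define f where "f tg = (SOME w. gen tg w)" for tg
      have fgen: "gen tg (f tg)" if "tg \<in> fst ` LL" for tg
        using genex[OF that] someI_ex unfolding f_def by metis
      have "inj_on f (fst ` LL)" unfolding inj_on_def using fgen genInj by metis
      moreover have "f ` (fst ` LL) \<subseteq> W"
      proof
        fix w assume "w \<in> f ` (fst ` LL)"
        then obtain tg where tg: "tg \<in> fst ` LL" "w = f tg" by blast
        have "ts < tg" using tg big unfolding LL_def by auto
        then show "w \<in> W" using genW fgen tg by blast
      qed
      ultimately have "card (fst ` LL) \<le> card W" using finW card_inj_on_le by blast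
      moreover have "inj_on fst LL" using Inv_lst[OF Inv_at[OF less_imp_le[OF \<tau>N]]] unfolding LL_def by blast
      then have "card (fst ` LL) = card LL" by (rule card_image)
      ultimately show False using big cW unfolding LL_def by linarith
    qed
  qed
  have kc: "k \<le> card ((R' \<inter> As) - B)" using quorum_inter[OF R'n As(1) cR' As(2) cb br fB] .
  have "(R' \<inter> As) - B \<subseteq> {a \<in> R'. \<exists>e. (ts, e) \<in> Ls' a}"
  proof
    fix a assume a: "a \<in> (R' \<inter> As) - B"
    then have "ts \<in> fst ` Ls' a" using key by blast
    then obtain x where "x \<in> Ls' a" "fst x = ts" by blast
    then have "(ts, snd x) \<in> Ls' a" by (metis prod.collapse)
    then show "a \<in> {a \<in> R'. \<exists>e. (ts, e) \<in> Ls' a}" using a by blast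
  qed
  moreover have "finite R'" using R'n finite_subset by blast
  ultimately have "card ((R' \<inter> As) - B) \<le> card {a \<in> R'. \<exists>e. (ts, e) \<in> Ls' a}"
    by (intro card_mono) auto
  then have tsc: "ts \<in> candidates k R' Ls'" unfolding candidates_def using kc by simp
  have "candidates k R' Ls' \<subseteq> fst ` sig (ss ! d)" using cand_sub[OF k1] Ls'sig by blast
  moreover have "finite (sig (ss ! d))" using Inv_sig[OF Inv_at] dN by simp
  ultimately have "finite (candidates k R' Ls')" using finite_subset by blast
  then have "ts \<le> Max (candidates k R' Ls')" using tsc by (rule Max_ge)
  moreover have "t = Max (candidates k R' Ls')" using G0(6) unfolding R'_def Ls'_def .
  ultimately have "ts \<le> t" by simp
  then show ?thesis using t1ts tt2 by simp
qed

end

theorem mainTheorem8: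
  fixes n k b \<delta> :: nat and B :: "nat set"
    and enc :: "'v \<Rightarrow> nat \<Rightarrow> 'e" and dec :: "'e set \<Rightarrow> 'v"
    and t0 :: "('w::linorder) tag" and v0 :: 'v and as :: "('w,'v) act list"
  assumes "1 \<le> k" and "k \<le> n" and "mds_code n k enc dec"
    and "1 \<le> \<delta>"
    and "B \<subseteq> {..<n}" and "card B \<le> b" and "real b < (real n - real k) / 3"
    and "execution n k \<delta> B enc dec t0 v0 as"
    and "bounded_concurrency \<delta> as"
    and "i < j" and "j < l" and "l < length as"
    and "as ! i = RResp c1 m1 t1 v1"
    and "as ! j = RInv c2 m2"
    and "as ! l = RResp c2 m2 t2 v2"
  shows "t1 \<le> t2"
proof -
  obtain ss where ss: "length ss = Suc (length as)" "ss ! 0 = init_state n B enc t0 v0"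
    "\<forall>i<length as. step n k \<delta> B enc dec (ss ! i) (as ! i) (ss ! Suc i)"
    using assms(8) unfolding execution_def by blast
  interpret r: run n k \<delta> B enc dec t0 v0 as ss
    using ss by unfold_locales auto
  show ?thesis
    using r.main[OF assms(1) assms(2) assms(5) assms(6) assms(7) assms(9) assms(10) assms(11) assms(12)
        assms(13) assms(14) assms(15)] .
qed

end
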